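(* Let $\mathscr{D}$ be a nonnegative integer-valued random variable with $\mathbb{P}(\mathscr{D}>t)=\mathcal{L}(t)t^{-\gamma}$, $\mathcal{L}$ slowly varying, $1<\gamma<2$. Let $D_1,\dots,D_n$ be i.i.d. copies and consider the configuration model with these degrees and the erased configuration model obtained from it. Then for every integer $p\ge0$ and every $\delta>0$, \[ \frac{\sum_{i=1}^nD_i^pY_i}{n^{\frac p\gamma+2-\gamma+\delta}}\to0\quad\text{and}\quad\frac{\sum_{1\le i<j\le n}Z_{ij}D_iD_j}{n^{\frac2\gamma+2-\gamma+\delta}}\to0 \] in probability.
   Context: Configuration model: vertex $i$ gets $D_i$ half-edges (one added if the sum is odd; ignored), paired uniformly at random; $X_{ij}$ is the number of edges between $i\neq j$, $X_{ii}$ the number of self-loops at $i$. The erased configuration model removes all self-loops and merges multiple edges into single edges. $Z_{ij}$ is the number of edges between $i$ and $j$ that are removed ($Z_{ii}=X_{ii}$, $Z_{ij}=X_{ij}-\mathbf 1\{X_{ij}>0\}$ for $i\ne j$), and $Y_i=\sum_{j=1}^nZ_{ij}=X_{ii}+\sum_{j\ne i}(X_{ij}-\mathbf 1\{X_{ij}>0\})$ is the number of removed stubs of vertex $i$. *)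

theory Defs
  imports "HOL-Probability.Probability"
begin

definition slowly_varying :: "(real \<Rightarrow> real) \<Rightarrow> bool" where
  "slowly_varying L \<longleftrightarrow> (\<forall>\<^sub>F x in at_top. L x > 0) \<and>
     (\<forall>a>0. ((\<lambda>x. L (a * x) / L x) \<longlongrightarrow> 1) at_top)"

definition tail :: "nat pmf \<Rightarrow> real \<Rightarrow> real" where
  "tail d t = measure_pmf.prob d {k. real k > t}"

definition adj_deg :: "nat \<Rightarrow> (nat \<Rightarrow> nat) \<Rightarrow> nat \<Rightarrow> nat" where
  "adj_deg n D i = (if odd (\<Sum>j<n. D j) \<and> i = n - 1 then D i + 1 else D i)"

definition halfedges :: "nat \<Rightarrow> (nat \<Rightarrow> nat) \<Rightarrow> (nat \<times> nat) set" where
  "halfedges n D = {(i, k). i < n \<and> k < adj_deg n D i}"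

definition matchings :: "'a set \<Rightarrow> ('a \<Rightarrow> 'a) set" where
  "matchings H = {m. (\<forall>x\<in>H. m x \<in> H \<and> m x \<noteq> x \<and> m (m x) = x) \<and> (\<forall>x. x \<notin> H \<longrightarrow> m x = x)}"

text \<open>Configuration model on n vertices: i.i.d. degrees D_0..D_{n-1} with law d
  (D_i = 0 for i >= n), then a uniformly random pairing of the half-edges.\<close>
definition CM :: "nat pmf \<Rightarrow> nat \<Rightarrow> ((nat \<Rightarrow> nat) \<times> (nat \<times> nat \<Rightarrow> nat \<times> nat)) pmf" where
  "CM d n = do { D \<leftarrow> Pi_pmf {..<n} 0 (\<lambda>_. d);
                 m \<leftarrow> pmf_of_set (matchings (halfedges n D));
                 return_pmf (D, m) }"

text \<open>X_ij: number of edges between i and j (i \<noteq> j); X_ii: number of self-loops at i.\<close>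
definition Xe :: "nat \<Rightarrow> (nat \<Rightarrow> nat) \<Rightarrow> (nat \<times> nat \<Rightarrow> nat \<times> nat) \<Rightarrow> nat \<Rightarrow> nat \<Rightarrow> nat" where
  "Xe n D m i j = (if i = j
      then card {h \<in> halfedges n D. fst h = i \<and> fst (m h) = i} div 2
      else card {h \<in> halfedges n D. fst h = i \<and> fst (m h) = j})"

text \<open>Z_ij: number of removed edges between i and j.\<close>
definition Ze :: "nat \<Rightarrow> (nat \<Rightarrow> nat) \<Rightarrow> (nat \<times> nat \<Rightarrow> nat \<times> nat) \<Rightarrow> nat \<Rightarrow> nat \<Rightarrow> nat" where
  "Ze n D m i j = (if i = j then Xe n D m i i
      else Xe n D m i j - (if Xe n D m i j > 0 then 1 else 0))"

definition Ye :: "nat \<Rightarrow> (nat \<Rightarrow> nat) \<Rightarrow> (nat \<times> nat \<Rightarrow> nat \<times> nat) \<Rightarrow> nat \<Rightarrow> nat" where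
  "Ye n D m i = (\<Sum>j<n. Ze n D m i j)"

end

theory Submission
  imports Defs
begin

definition sw :: "'a \<Rightarrow> 'a \<Rightarrow> 'a \<Rightarrow> 'a" where
  "sw v w x = (if x = v then w else if x = w then v else x)"

lemma sw_sw[simp]: "sw v w (sw v w x) = x"
  by (auto simp: sw_def)

lemma sw_other[simp]: "x \<noteq> v \<Longrightarrow> x \<noteq> w \<Longrightarrow> sw v w x = x"
  by (auto simp: sw_def)

lemma sw_inj: "sw v w x = sw v w y \<longleftrightarrow> x = y"
  by (metis sw_sw)

lemma sw_mem: "v \<in> H \<Longrightarrow> w \<in> H \<Longrightarrow> sw v w x \<in> H \<longleftrightarrow> x \<in> H"
  by (auto simp: sw_def)

lemma conj_matching:
  assumes "m \<in> matchings H" "v \<in> H" "w \<in> H"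
  shows "(sw v w \<circ> m \<circ> sw v w) \<in> matchings H"
proof -
  have m: "\<And>x. x \<in> H \<Longrightarrow> m x \<in> H \<and> m x \<noteq> x \<and> m (m x) = x" "\<And>x. x \<notin> H \<Longrightarrow> m x = x"
    using assms(1) by (auto simp: matchings_def)
  show ?thesis unfolding matchings_def
  proof (intro CollectI conjI ballI allI impI)
    fix x assume x: "x \<in> H"
    then have sx: "sw v w x \<in> H" using sw_mem assms by metis
    show "(sw v w \<circ> m \<circ> sw v w) x \<in> H" using m(1)[OF sx] sw_mem[OF assms(2) assms(3)] by simp
    show "(sw v w \<circ> m \<circ> sw v w) x \<noteq> x"
      using m(1)[OF sx] by (metis comp_apply sw_sw)
    show "(sw v w \<circ> m \<circ> sw v w) ((sw v w \<circ> m \<circ> sw v w) x) = x"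
      using m(1)[OF sx] by simp
  next
    fix x assume x: "x \<notin> H"
    then have "x \<noteq> v" "x \<noteq> w" using assms by auto
    then show "(sw v w \<circ> m \<circ> sw v w) x = x" using m(2)[OF x] by simp
  qed
qed

lemma finite_matchings:
  assumes "finite H" shows "finite (matchings H)"
proof -
  have "matchings H \<subseteq> (\<lambda>f x. if x \<in> H then f x else x) ` (PiE H (\<lambda>_. H))"
  proof
    fix m assume m: "m \<in> matchings H"
    have "m = (\<lambda>x. if x \<in> H then restrict m H x else x)"
      using m by (auto simp: matchings_def fun_eq_iff)
    moreover have "restrict m H \<in> PiE H (\<lambda>_. H)" using m by (auto simp: matchings_def)
    ultimately show "m \<in> (\<lambda>f x. if x \<in> H then f x else x) ` (PiE H (\<lambda>_. H))" by blast
  qed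
  moreover have "finite (PiE H (\<lambda>_. H))" using assms by (simp add: finite_PiE)
  ultimately show ?thesis using finite_subset by blast
qed

lemma matchings_nonempty:
  "finite H \<Longrightarrow> even (card H) \<Longrightarrow> matchings H \<noteq> {}"
proof (induction "card H" arbitrary: H rule: less_induct)
  case less
  show ?case
  proof (cases "H = {}")
    case True
    then have "id \<in> matchings H" by (auto simp: matchings_def)
    then show ?thesis by blast
  next
    case False
    then obtain x where x: "x \<in> H" by blast
    have "card H \<ge> 2"
    proof -
      have "card H \<noteq> 0" using False less.prems by simp
      then show ?thesis using less.prems(2) by presburger
    qed
    then have "card (H - {x}) \<ge> 1" using x less.prems by simp
    then have "H - {x} \<noteq> {}" by (metis card.empty not_one_le_zero)
    then obtain y where y: "y \<in> H" "y \<noteq> x" by blast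
    define H' where "H' = H - {x, y}"
    have cH': "card H' = card H - 2" using x y less.prems by (simp add: H'_def card_Diff_subset)
    have "card H' < card H" using cH' \<open>card H \<ge> 2\<close> by simp
    moreover have "even (card H')" using cH' less.prems \<open>card H \<ge> 2\<close> by simp
    ultimately obtain m' where m': "m' \<in> matchings H'"
      using less.hyps[of H'] less.prems by (auto simp: H'_def)
    define m where "m = m'(x := y, y := x)"
    have m'1: "\<And>z. z \<in> H' \<Longrightarrow> m' z \<in> H' \<and> m' z \<noteq> z \<and> m' (m' z) = z"
      and m'2: "\<And>z. z \<notin> H' \<Longrightarrow> m' z = z" using m' by (auto simp: matchings_def)
    have "m \<in> matchings H"
      unfolding matchings_def
    proof (intro CollectI conjI ballI allI impI)
      fix z assume z: "z \<in> H"
      show "m z \<in> H" using m'1 z x y by (auto simp: m_def H'_def)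
      show "m z \<noteq> z" using m'1 z x y by (auto simp: m_def H'_def)
      show "m (m z) = z"
      proof (cases "z = x \<or> z = y")
        case True then show ?thesis using y by (auto simp: m_def)
      next
        case False
        then have "z \<in> H'" using z by (auto simp: H'_def)
        then show ?thesis using m'1[of z] False by (auto simp: m_def H'_def)
      qed
    next
      fix z assume "z \<notin> H"
      then show "m z = z" using m'2[of z] x y by (auto simp: m_def H'_def)
    qed
    then show ?thesis by blast
  qed
qed

lemma count_sym:
  fixes A :: "('a \<Rightarrow> 'a) set"
  assumes finA: "finite A" and finV: "finite V"
    and inV: "\<And>m. m \<in> A \<Longrightarrow> m u \<in> V"
    and uV: "u \<notin> V"
    and clos: "\<And>m v w. m \<in> A \<Longrightarrow> v \<in> V \<Longrightarrow> w \<in> V \<Longrightarrow> (sw v w \<circ> m \<circ> sw v w) \<in> A"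
    and v: "v \<in> V"
  shows "card {m\<in>A. m u = v} * card V = card A"
proof -
  have eq: "card {m\<in>A. m u = w} = card {m\<in>A. m u = v}" if w: "w \<in> V" for w
  proof -
    let ?c = "\<lambda>m. sw v w \<circ> m \<circ> sw v w"
    have uu: "sw v w u = u" using uV v w by (intro sw_other) auto
    have svw: "sw v w v = w" "sw v w w = v" by (simp_all add: sw_def)
    have "bij_betw ?c {m\<in>A. m u = v} {m\<in>A. m u = w}"
    proof (rule bij_betwI[where g = ?c])
      show "?c \<in> {m\<in>A. m u = v} \<rightarrow> {m\<in>A. m u = w}"
      proof
        fix m assume m: "m \<in> {m\<in>A. m u = v}"
        then have "?c m \<in> A" using clos v w by blast
        moreover have "?c m u = w" using m uu svw by simp
        ultimately show "?c m \<in> {m\<in>A. m u = w}" by blast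
      qed
      show "?c \<in> {m\<in>A. m u = w} \<rightarrow> {m\<in>A. m u = v}"
      proof
        fix m assume m: "m \<in> {m\<in>A. m u = w}"
        then have "?c m \<in> A" using clos v w by blast
        moreover have "?c m u = v" using m uu svw by simp
        ultimately show "?c m \<in> {m\<in>A. m u = v}" by blast
      qed
      show "?c (?c m) = m" for m by (simp add: fun_eq_iff)
      show "?c (?c m) = m" for m by (simp add: fun_eq_iff)
    qed
    then show ?thesis by (simp add: bij_betw_same_card)
  qed
  have AU: "A = (\<Union>w\<in>V. {m\<in>A. m u = w})" using inV by auto
  have "card (\<Union>w\<in>V. {m\<in>A. m u = w}) = (\<Sum>w\<in>V. card {m\<in>A. m u = w})"
    by (rule card_UN_disjoint) (use finA finV in auto)
  then have "card A = (\<Sum>w\<in>V. card {m\<in>A. m u = w})" using AU by simp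
  also have "\<dots> = (\<Sum>w\<in>V. card {m\<in>A. m u = v})" using eq by simp
  finally show ?thesis by simp
qed

lemma card_match1:
  assumes fin: "finite H" and x: "x \<in> H" and y: "y \<in> H" "y \<noteq> x"
  shows "card {m\<in>matchings H. m x = y} * (card H - 1) = card (matchings H)"
proof -
  have "card {m\<in>matchings H. m x = y} * card (H - {x}) = card (matchings H)"
  proof (rule count_sym[where V = "H - {x}"])
    show "finite (matchings H)" using finite_matchings fin by blast
    show "finite (H - {x})" using fin by simp
    show "m x \<in> H - {x}" if "m \<in> matchings H" for m using that x by (auto simp: matchings_def)
    show "x \<notin> H - {x}" by simp
    show "sw a b \<circ> m \<circ> sw a b \<in> matchings H" if "m \<in> matchings H" "a \<in> H - {x}" "b \<in> H - {x}" for m a b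
      using that conj_matching[of m H a b] by simp
    show "y \<in> H - {x}" using y by simp
  qed
  then show ?thesis using x fin by simp
qed

lemma card_match2:
  assumes fin: "finite H" and inH: "x \<in> H" "y \<in> H" "u \<in> H" "v \<in> H"
    and dist: "x \<noteq> y" "x \<noteq> u" "x \<noteq> v" "y \<noteq> u" "y \<noteq> v" "u \<noteq> v"
  shows "card {m\<in>matchings H. m x = y \<and> m u = v} * ((card H - 1) * (card H - 3))
         = card (matchings H)"
proof -
  let ?A = "{m\<in>matchings H. m x = y}"
  have c1: "card {m\<in>?A. m u = v} * card (H - {x, y, u}) = card ?A"
  proof (rule count_sym[where V = "H - {x,y,u}"])
    show "finite ?A" using finite_matchings[OF fin] by simp
    show "finite (H - {x,y,u})" using fin by simp
    show "m u \<in> H - {x, y, u}" if m: "m \<in> ?A" for m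
    proof -
      have mm: "\<And>z. z \<in> H \<Longrightarrow> m z \<in> H \<and> m z \<noteq> z \<and> m (m z) = z" and mx: "m x = y"
        using m by (auto simp: matchings_def)
      have "m u \<noteq> y" using mm[OF inH(3)] mm[OF inH(1)] mx dist by metis
      moreover have "m u \<noteq> x" using mm[OF inH(1)] mm[OF inH(3)] mx dist by metis
      ultimately show ?thesis using mm[OF inH(3)] by auto
    qed
    show "u \<notin> H - {x, y, u}" by simp
    show "(sw a b \<circ> m \<circ> sw a b) \<in> ?A" if "m \<in> ?A" "a \<in> H - {x, y, u}" "b \<in> H - {x, y, u}" for m a b
    proof -
      have "sw a b \<circ> m \<circ> sw a b \<in> matchings H" using that conj_matching[of m H a b] by simp
      moreover have "(sw a b \<circ> m \<circ> sw a b) x = y"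
      proof -
        have "sw a b x = x" by (rule sw_other) (use that in auto)
        moreover have "sw a b y = y" by (rule sw_other) (use that in auto)
        ultimately show ?thesis using that by simp
      qed
      ultimately show ?thesis by blast
    qed
    show "v \<in> H - {x, y, u}" using inH dist by auto
  qed
  have c2: "card (H - {x, y, u}) = card H - 3" using inH dist fin by (simp add: card_Diff_subset)
  have c3: "card ?A * (card H - 1) = card (matchings H)" using card_match1[OF fin inH(1) inH(2)] dist by auto
  have c4: "{m\<in>?A. m u = v} = {m\<in>matchings H. m x = y \<and> m u = v}" by auto
  have c5: "card {m\<in>matchings H. m x = y \<and> m u = v} * (card H - 3) = card ?A"
    using c1 c2 c4 by simp
  have "card {m\<in>matchings H. m x = y \<and> m u = v} * ((card H - 1) * (card H - 3))
     = (card {m\<in>matchings H. m x = y \<and> m u = v} * (card H - 3)) * (card H - 1)"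
    by (simp only: mult_ac)
  also have "\<dots> = card (matchings H)" using c5 c3 by simp
  finally show ?thesis .

qed

lemma sum_ind_card: "finite A \<Longrightarrow> (\<Sum>x\<in>A. (if P x then 1 else 0::real)) = real (card {x\<in>A. P x})"
  by (simp add: sum.inter_filter[symmetric])

lemma card_pair_le:
  assumes fin: "finite H" and h: "h \<in> H"
  shows "real (card {m\<in>matchings H. m h = t}) \<le> real (card (matchings H)) / (real (card H) - 1)"
proof (cases "t \<in> H \<and> t \<noteq> h")
  case True
  have e: "card {m\<in>matchings H. m h = t} * (card H - 1) = card (matchings H)"
    using card_match1[OF fin h] True by auto
  have "card H \<ge> 2"
  proof -
    have "{h, t} \<subseteq> H" using h True by auto
    then have "card {h, t} \<le> card H" using fin by (intro card_mono) auto
    moreover have "card {h, t} = 2" using True by auto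
    ultimately show ?thesis by simp
  qed
  have r: "real (card H - 1) = real (card H) - 1" using \<open>card H \<ge> 2\<close> by (simp add: of_nat_diff)
  have "real (card {m\<in>matchings H. m h = t}) * (real (card H) - 1) = real (card (matchings H))"
    using arg_cong[OF e, of real] unfolding of_nat_mult r .
  moreover have "real (card H) - 1 > 0" using \<open>card H \<ge> 2\<close> by simp
  ultimately show ?thesis by (simp add: field_simps)
next
  case False
  have E: "{m\<in>matchings H. m h = t} = {}"
  proof (intro equals0I)
    fix m assume m: "m \<in> {m\<in>matchings H. m h = t}"
    then have "m h \<in> H" "m h \<noteq> h" using h by (auto simp: matchings_def)
    then show False using m False by auto
  qed
  have "card H \<ge> 1" using fin h by (metis One_nat_def Suc_leI card_gt_0_iff empty_iff)
  then show ?thesis unfolding E by simp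
qed

lemma card_quad_le:
  assumes fin: "finite H" and inH: "x \<in> H" "y \<in> H" "u \<in> H" "v \<in> H"
    and dist: "x \<noteq> u" "y \<noteq> v" and N4: "card H \<ge> 4"
    and disj: "x \<noteq> y" "x \<noteq> v" "u \<noteq> y" "u \<noteq> v"
  shows "real (card {m\<in>matchings H. m x = y \<and> m u = v})
         \<le> real (card (matchings H)) / ((real (card H) - 1) * (real (card H) - 3))"
proof -
  have e: "card {m\<in>matchings H. m x = y \<and> m u = v} * ((card H - 1) * (card H - 3)) = card (matchings H)"
    using card_match2[OF fin inH] dist disj by auto
  have r: "real (card H - 1) = real (card H) - 1" "real (card H - 3) = real (card H) - 3"
    using N4 by (simp_all add: of_nat_diff)
  have "real (card {m\<in>matchings H. m x = y \<and> m u = v}) * ((real (card H) - 1) * (real (card H) - 3))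
      = real (card (matchings H))"
    using arg_cong[OF e, of real] unfolding of_nat_mult r .
  moreover have "(real (card H) - 1) * (real (card H) - 3) > 0" using N4 by simp
  ultimately show ?thesis by (simp add: field_simps)
qed

definition Xc :: "('a \<Rightarrow> 'a) \<Rightarrow> 'a set \<Rightarrow> 'a set \<Rightarrow> real" where
  "Xc m S T = (\<Sum>h\<in>S. if m h \<in> T then 1 else 0)"

lemma Xc_card: "finite S \<Longrightarrow> Xc m S T = real (card {h\<in>S. m h \<in> T})"
  unfolding Xc_def by (rule sum_ind_card)

lemma sum_Xc_le:
  assumes fin: "finite H" and S: "S \<subseteq> H" and T: "T \<subseteq> H"
  shows "(\<Sum>m\<in>matchings H. Xc m S T)
     \<le> real (card (matchings H)) * real (card S) * real (card T) / (real (card H) - 1)"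
proof -
  let ?A = "matchings H" let ?c = "real (card ?A) / (real (card H) - 1)"
  have fS: "finite S" and fT: "finite T" using fin S T finite_subset by auto
  have finA: "finite ?A" using finite_matchings[OF fin] .
  have ind: "(if m h \<in> T then 1 else 0::real) = (\<Sum>t\<in>T. if m h = t then 1 else 0)" for m h
    using fT by (simp add: sum.delta)
  have "(\<Sum>m\<in>?A. Xc m S T) = (\<Sum>m\<in>?A. \<Sum>h\<in>S. \<Sum>t\<in>T. if m h = t then 1 else 0)"
    unfolding Xc_def by (intro sum.cong refl) (rule ind)
  also have "\<dots> = (\<Sum>h\<in>S. \<Sum>t\<in>T. \<Sum>m\<in>?A. if m h = t then 1 else 0)"
    by (simp add: sum.swap[of _ ?A] sum.swap[of _ ?A T])
  also have "\<dots> = (\<Sum>h\<in>S. \<Sum>t\<in>T. real (card {m\<in>?A. m h = t}))"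
    using finA by (simp add: sum_ind_card)
  also have "\<dots> \<le> (\<Sum>h\<in>S. \<Sum>t\<in>T. ?c)"
    by (intro sum_mono card_pair_le[OF fin]) (use S in auto)
  also have "\<dots> = real (card (matchings H)) * real (card S) * real (card T) / (real (card H) - 1)"
    by simp
  finally show ?thesis .
qed

lemma Xc_sq:
  assumes fS: "finite S"
  shows "Xc m S T * (Xc m S T - 1) =
    (\<Sum>h1\<in>S. \<Sum>h2\<in>S - {h1}. (if m h1 \<in> T then 1 else 0) * (if m h2 \<in> T then 1 else 0))"
proof -
  let ?c = "\<lambda>h. (if m h \<in> T then 1 else 0::real)"
  have "Xc m S T * Xc m S T = (\<Sum>h1\<in>S. \<Sum>h2\<in>S. ?c h1 * ?c h2)"
    unfolding Xc_def by (simp add: sum_product)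
  also have "\<dots> = (\<Sum>h1\<in>S. ?c h1 * ?c h1 + (\<Sum>h2\<in>S - {h1}. ?c h1 * ?c h2))"
    by (intro sum.cong refl) (use fS in \<open>simp add: sum.remove\<close>)
  also have "\<dots> = (\<Sum>h1\<in>S. ?c h1) + (\<Sum>h1\<in>S. \<Sum>h2\<in>S - {h1}. ?c h1 * ?c h2)"
  proof -
    have sq: "?c h * ?c h = ?c h" for h by simp
    show ?thesis by (simp only: sq sum.distrib)
  qed
  also have "\<dots> = Xc m S T + (\<Sum>h1\<in>S. \<Sum>h2\<in>S - {h1}. ?c h1 * ?c h2)"
    unfolding Xc_def by simp
  finally show ?thesis by (simp add: algebra_simps)
qed

lemma sum_Xc2_le:
  assumes fin: "finite H" and S: "S \<subseteq> H" and T: "T \<subseteq> H" and disj: "S \<inter> T = {}"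
    and N4: "card H \<ge> 4"
  shows "(\<Sum>m\<in>matchings H. Xc m S T * (Xc m S T - 1))
     \<le> real (card (matchings H)) * real (card S) ^ 2 * real (card T) ^ 2
        / ((real (card H) - 1) * (real (card H) - 3))"
proof -
  let ?A = "matchings H" let ?c = "real (card ?A) / ((real (card H) - 1) * (real (card H) - 3))"
  have fS: "finite S" and fT: "finite T" using fin S T finite_subset by auto
  have finA: "finite ?A" using finite_matchings[OF fin] .
  have ind: "(if m h1 \<in> T then 1 else 0::real) * (if m h2 \<in> T then 1 else 0) =
     (\<Sum>t1\<in>T. \<Sum>t2\<in>T. if m h1 = t1 \<and> m h2 = t2 then 1 else 0)" for m h1 h2
  proof -
    have "(\<Sum>t1\<in>T. \<Sum>t2\<in>T. if m h1 = t1 \<and> m h2 = t2 then 1 else 0::real)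
        = (\<Sum>t1\<in>T. (if m h1 = t1 then 1 else 0) * (\<Sum>t2\<in>T. if m h2 = t2 then 1 else 0))"
      by (intro sum.cong refl) (auto simp: sum_distrib_left)
    also have "\<dots> = (\<Sum>t1\<in>T. (if m h1 = t1 then 1 else 0)) * (\<Sum>t2\<in>T. if m h2 = t2 then 1 else 0::real)"
      by (simp add: sum_distrib_right)
    also have "\<dots> = (if m h1 \<in> T then 1 else 0) * (if m h2 \<in> T then 1 else 0)"
      using fT by (simp add: sum.delta)
    finally show ?thesis by simp
  qed
  have "(\<Sum>m\<in>?A. Xc m S T * (Xc m S T - 1))
     = (\<Sum>m\<in>?A. \<Sum>h1\<in>S. \<Sum>h2\<in>S - {h1}. \<Sum>t1\<in>T. \<Sum>t2\<in>T. if m h1 = t1 \<and> m h2 = t2 then 1 else 0)"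
    using fS by (simp add: Xc_sq ind)
  also have "\<dots> = (\<Sum>h1\<in>S. \<Sum>h2\<in>S - {h1}. \<Sum>t1\<in>T. \<Sum>t2\<in>T. \<Sum>m\<in>?A. if m h1 = t1 \<and> m h2 = t2 then 1 else 0)"
    by (simp add: sum.swap[of _ ?A])
  also have "\<dots> = (\<Sum>h1\<in>S. \<Sum>h2\<in>S - {h1}. \<Sum>t1\<in>T. \<Sum>t2\<in>T. real (card {m\<in>?A. m h1 = t1 \<and> m h2 = t2}))"
    using finA by (simp add: sum_ind_card)
  also have "\<dots> \<le> (\<Sum>h1\<in>S. \<Sum>h2\<in>S - {h1}. \<Sum>t1\<in>T. \<Sum>t2\<in>T. ?c)"
  proof (intro sum_mono)
    fix h1 h2 t1 t2 assume h1: "h1 \<in> S" and h2: "h2 \<in> S - {h1}" and t1: "t1 \<in> T" and t2: "t2 \<in> T"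
    show "real (card {m\<in>?A. m h1 = t1 \<and> m h2 = t2}) \<le> ?c"
    proof (cases "t1 = t2")
      case True
      have E: "{m\<in>?A. m h1 = t1 \<and> m h2 = t2} = {}"
      proof (intro equals0I)
        fix m assume m: "m \<in> {m\<in>?A. m h1 = t1 \<and> m h2 = t2}"
        have "m (m h1) = h1" "m (m h2) = h2" using m h1 h2 S by (auto simp: matchings_def)
        then show False using m True h2 by auto
      qed
      have "?c \<ge> 0" using N4 by (intro divide_nonneg_nonneg) auto
      then show ?thesis unfolding E by simp
    next
      case False
      show ?thesis
        by (rule card_quad_le[OF fin]) (use h1 h2 t1 t2 S T disj False N4 in auto)
    qed
  qed
  also have "\<dots> \<le> (\<Sum>h1\<in>S. \<Sum>h2\<in>S. \<Sum>t1\<in>T. \<Sum>t2\<in>T. ?c)"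
  proof -
    define c where "c = ?c"
    have "c \<ge> 0" using N4 unfolding c_def by (intro divide_nonneg_nonneg) auto
    then have "(\<Sum>h1\<in>S. \<Sum>h2\<in>S - {h1}. \<Sum>t1\<in>T. \<Sum>t2\<in>T. c) \<le> (\<Sum>h1\<in>S. \<Sum>h2\<in>S. \<Sum>t1\<in>T. \<Sum>t2\<in>T. c)"
      using fS by (intro sum_mono sum_mono2) (auto intro!: sum_nonneg)
    then show ?thesis unfolding c_def .
  qed
  also have "\<dots> = real (card S) * real (card S) * real (card T) * real (card T) * ?c"
    by simp
  finally show ?thesis by (simp add: power2_eq_square field_simps)
qed

lemma halfedges_Sigma: "halfedges n D = Sigma {..<n} (\<lambda>i. {..<adj_deg n D i})"
  by (auto simp: halfedges_def)

lemma finite_halfedges[simp]: "finite (halfedges n D)"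
  by (simp add: halfedges_Sigma)

lemma card_halfedges: "card (halfedges n D) = (\<Sum>i<n. adj_deg n D i)"
  by (simp add: halfedges_Sigma card_SigmaI)

lemma sum_adj_deg: "(\<Sum>i<n. adj_deg n D i) = (\<Sum>i<n. D i) + (if odd (\<Sum>i<n. D i) \<and> n > 0 then 1 else 0)"
proof (cases "odd (\<Sum>i<n. D i) \<and> n > 0")
  case True
  then obtain k where n: "n = Suc k" by (cases n) auto
  have "(\<Sum>i<n. adj_deg n D i) = (\<Sum>i<k. adj_deg n D i) + adj_deg n D k" using n by simp
  also have "(\<Sum>i<k. adj_deg n D i) = (\<Sum>i<k. D i)"
    by (intro sum.cong refl) (auto simp: adj_deg_def n)
  also have "adj_deg n D k = D k + 1" using True by (simp add: adj_deg_def n)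
  finally show ?thesis using True n by simp
next
  case False
  then have "(\<Sum>i<n. adj_deg n D i) = (\<Sum>i<n. D i)"
    by (intro sum.cong refl) (auto simp: adj_deg_def)
  then show ?thesis using False by simp
qed

lemma even_card_halfedges: "even (card (halfedges n D))"
  unfolding card_halfedges sum_adj_deg by (cases n) auto

lemma card_halfedges_ge: "card (halfedges n D) \<ge> (\<Sum>i<n. D i)"
  unfolding card_halfedges sum_adj_deg by simp

lemma adj_deg_le: "adj_deg n D i \<le> D i + 1" "D i \<le> adj_deg n D i"
  by (auto simp: adj_deg_def)

definition Sv :: "nat \<Rightarrow> (nat \<Rightarrow> nat) \<Rightarrow> nat \<Rightarrow> (nat \<times> nat) set" where
  "Sv n D i = {h\<in>halfedges n D. fst h = i}"

lemma Sv_sub: "Sv n D i \<subseteq> halfedges n D" by (auto simp: Sv_def)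

lemma card_Sv: "i < n \<Longrightarrow> card (Sv n D i) = adj_deg n D i"
proof -
  assume i: "i < n"
  have "Sv n D i = (\<lambda>k. (i, k)) ` {..<adj_deg n D i}" using i by (auto simp: Sv_def halfedges_def)
  then show ?thesis by (simp add: card_image inj_on_def)
qed

lemma Sv_disj: "i \<noteq> j \<Longrightarrow> Sv n D i \<inter> Sv n D j = {}" by (auto simp: Sv_def)

lemma matching_in: "m \<in> matchings H \<Longrightarrow> h \<in> H \<Longrightarrow> m h \<in> H"
  by (auto simp: matchings_def)

lemma Xe_eq:
  assumes m: "m \<in> matchings (halfedges n D)" and ij: "i \<noteq> j"
  shows "real (Xe n D m i j) = Xc m (Sv n D i) (Sv n D j)"
proof -
  have "{h\<in>halfedges n D. fst h = i \<and> fst (m h) = j} = {h\<in>Sv n D i. m h \<in> Sv n D j}"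
    using matching_in[OF m] by (auto simp: Sv_def)
  then show ?thesis using ij by (simp add: Xe_def Xc_card Sv_def)
qed

lemma Xe_diag_le:
  assumes m: "m \<in> matchings (halfedges n D)"
  shows "real (Xe n D m i i) \<le> Xc m (Sv n D i) (Sv n D i)"
proof -
  have "{h\<in>halfedges n D. fst h = i \<and> fst (m h) = i} = {h\<in>Sv n D i. m h \<in> Sv n D i}"
    using matching_in[OF m] by (auto simp: Sv_def)
  then have "Xc m (Sv n D i) (Sv n D i) = real (card {h\<in>halfedges n D. fst h = i \<and> fst (m h) = i})"
    by (simp add: Xc_card Sv_def)
  then show ?thesis by (simp add: Xe_def)
qed

lemma nat_removed_le: "real (x - (if x > 0 then 1 else 0)) \<le> real x * (real x - 1) / 2"
proof (cases "x \<ge> 2")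
  case True
  then have "real (x - (if x > 0 then 1 else 0)) = real x - 1" by (simp add: of_nat_diff)
  moreover have "real x - 1 \<le> real x * (real x - 1) / 2"
  proof -
    have "2 * (real x - 1) \<le> real x * (real x - 1)" using True
      by (intro mult_right_mono) auto
    then show ?thesis by simp
  qed
  ultimately show ?thesis by linarith
next
  case False
  then have "x = 0 \<or> x = 1" by auto
  then show ?thesis by auto
qed

lemma min_powr_le:
  fixes \<alpha> s :: real
  assumes "\<alpha> \<ge> 0" "1 \<le> s" "s \<le> 2" "B \<le> \<alpha>" "B \<le> \<alpha>^2"
  shows "B \<le> \<alpha> powr s"
proof (cases "\<alpha> \<ge> 1")
  case True
  then have "\<alpha> powr 1 \<le> \<alpha> powr s" using assms by (intro powr_mono) auto
  then show ?thesis using assms True by simp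
next
  case False
  show ?thesis
  proof (cases "\<alpha> = 0")
    case True then show ?thesis using assms by simp
  next
    case a0: False
    then have "\<alpha> powr 2 \<le> \<alpha> powr s" using assms False by (intro powr_mono') auto
    moreover have "\<alpha> powr 2 = \<alpha>^2" using assms a0 by (simp add: powr_realpow)
    ultimately show ?thesis using assms by simp
  qed
qed

context
  fixes n :: nat and D :: "nat \<Rightarrow> nat"
begin

abbreviation "HH \<equiv> halfedges n D"
abbreviation "AA \<equiv> matchings (halfedges n D)"
abbreviation "NN \<equiv> real (card (halfedges n D))"

lemma sum_Ze_offdiag:
  assumes i: "i < n" and j: "j < n" and ij: "i \<noteq> j" and N5: "card HH \<ge> 5"
    and s: "1 \<le> s" "s \<le> 2"
  shows "(\<Sum>m\<in>AA. real (Ze n D m i j))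
     \<le> real (card AA) * (real (adj_deg n D i) * real (adj_deg n D j) / (NN - 1)) powr s"
proof -
  let ?S = "Sv n D i" let ?T = "Sv n D j" let ?c = "real (card AA)"
  let ?\<alpha> = "real (adj_deg n D i) * real (adj_deg n D j) / (NN - 1)"
  have cA: "?c > 0" using matchings_nonempty[of HH] even_card_halfedges finite_matchings[of HH] 
    by (simp add: card_gt_0_iff)
  have ZX: "real (Ze n D m i j) \<le> Xc m ?S ?T" "real (Ze n D m i j) \<le> Xc m ?S ?T * (Xc m ?S ?T - 1) / 2"
    if m: "m \<in> AA" for m
    using Xe_eq[OF m ij] nat_removed_le[of "Xe n D m i j"] ij by (auto simp: Ze_def of_nat_diff)
  have "(\<Sum>m\<in>AA. real (Ze n D m i j)) \<le> (\<Sum>m\<in>AA. Xc m ?S ?T)"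
    using ZX by (intro sum_mono) auto
  also have "\<dots> \<le> ?c * real (card ?S) * real (card ?T) / (NN - 1)"
    by (rule sum_Xc_le) (auto simp: Sv_def)
  also have "\<dots> = ?c * ?\<alpha>" using i j by (simp add: card_Sv)
  finally have b1: "(\<Sum>m\<in>AA. real (Ze n D m i j)) / ?c \<le> ?\<alpha>" using cA by (simp add: field_simps)
  have "(\<Sum>m\<in>AA. real (Ze n D m i j)) \<le> (\<Sum>m\<in>AA. Xc m ?S ?T * (Xc m ?S ?T - 1) / 2)"
    using ZX by (intro sum_mono) auto
  also have "\<dots> = (\<Sum>m\<in>AA. Xc m ?S ?T * (Xc m ?S ?T - 1)) / 2" by (simp add: sum_divide_distrib)
  also have "\<dots> \<le> (?c * real (card ?S) ^ 2 * real (card ?T) ^ 2 / ((NN - 1) * (NN - 3))) / 2"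
    by (intro divide_right_mono sum_Xc2_le) (use N5 Sv_disj[OF ij] in \<open>auto simp: Sv_def\<close>)
  also have "\<dots> \<le> ?c * ?\<alpha>^2"
  proof -
    have N: "NN \<ge> 5" using N5 by simp
    have aN: "?\<alpha> * (NN - 1) = real (card ?S) * real (card ?T)"
      using i j N by (simp add: card_Sv)
    have "real (card ?S) ^ 2 * real (card ?T) ^ 2 = ?\<alpha>^2 * (NN - 1)^2"
      unfolding power_mult_distrib[symmetric] aN[symmetric] by simp
    moreover have "NN - 1 \<noteq> 0" "NN - 3 \<noteq> 0" using N by auto
    ultimately have "(?c * real (card ?S) ^ 2 * real (card ?T) ^ 2 / ((NN - 1) * (NN - 3))) / 2
        = ?c * ?\<alpha>^2 * ((NN - 1) / (2 * (NN - 3)))"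
      by (simp add: mult.assoc power2_eq_square divide_simps)
    also have "\<dots> \<le> ?c * ?\<alpha>^2 * 1"
      using N cA by (intro mult_left_mono) (auto simp: field_simps)
    finally show ?thesis by simp
  qed
  finally have b2: "(\<Sum>m\<in>AA. real (Ze n D m i j)) / ?c \<le> ?\<alpha>^2" using cA by (simp add: field_simps)
  have "?\<alpha> \<ge> 0" using N5 by simp
  then have "(\<Sum>m\<in>AA. real (Ze n D m i j)) / ?c \<le> ?\<alpha> powr s"
    using min_powr_le[OF _ s b1 b2] by simp
  then show ?thesis using cA by (simp add: field_simps)
qed

lemma sum_Ze_diag:
  assumes i: "i < n" and N5: "card HH \<ge> 5"
  shows "(\<Sum>m\<in>AA. real (Ze n D m i i)) \<le> real (card AA) * real (adj_deg n D i) ^ 2 / (NN - 1)"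
proof -
  have "(\<Sum>m\<in>AA. real (Ze n D m i i)) \<le> (\<Sum>m\<in>AA. Xc m (Sv n D i) (Sv n D i))"
    using Xe_diag_le by (intro sum_mono) (auto simp: Ze_def)
  also have "\<dots> \<le> real (card AA) * real (card (Sv n D i)) * real (card (Sv n D i)) / (NN - 1)"
    by (rule sum_Xc_le) (auto simp: Sv_def)
  finally show ?thesis using i by (simp add: card_Sv power2_eq_square)
qed

lemma cardAA_pos: "card AA > 0"
  using matchings_nonempty[of HH] even_card_halfedges finite_matchings[of HH]
  by (simp add: card_gt_0_iff)

lemma bound_first:
  assumes N5: "card HH \<ge> 5" and s: "1 \<le> s" "s \<le> 2"
  shows "(\<Sum>m\<in>AA. \<Sum>i<n. real (D i) ^ p * real (Ye n D m i))
     \<le> real (card AA) * (\<Sum>i<n. real (D i) ^ p * (real (adj_deg n D i) ^ 2 / (NN - 1)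
          + (\<Sum>j<n. (real (adj_deg n D i) * real (adj_deg n D j) / (NN - 1)) powr s)))"
proof -
  let ?c = "real (card AA)"
  have "(\<Sum>m\<in>AA. \<Sum>i<n. real (D i) ^ p * real (Ye n D m i))
      = (\<Sum>i<n. real (D i) ^ p * (\<Sum>m\<in>AA. real (Ze n D m i i) + (\<Sum>j\<in>{..<n} - {i}. real (Ze n D m i j))))"
  proof -
    have "(\<Sum>m\<in>AA. \<Sum>i<n. real (D i) ^ p * real (Ye n D m i))
       = (\<Sum>i<n. real (D i) ^ p * (\<Sum>m\<in>AA. real (Ye n D m i)))"
      by (simp add: sum.swap[of _ AA] sum_distrib_left)
    also have "\<dots> = (\<Sum>i<n. real (D i) ^ p * (\<Sum>m\<in>AA. real (Ze n D m i i) + (\<Sum>j\<in>{..<n} - {i}. real (Ze n D m i j))))"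
    proof (intro sum.cong refl arg_cong2[where f = "(*)"] )
      fix i m assume i: "i \<in> {..<n}" 
      show "real (Ye n D m i) = real (Ze n D m i i) + (\<Sum>j\<in>{..<n} - {i}. real (Ze n D m i j))"
        using i by (simp add: Ye_def sum.remove[of "{..<n}" i])
    qed
    finally show ?thesis .
  qed
  also have "\<dots> \<le> (\<Sum>i<n. real (D i) ^ p * (?c * real (adj_deg n D i) ^ 2 / (NN - 1)
        + (\<Sum>j<n. ?c * (real (adj_deg n D i) * real (adj_deg n D j) / (NN - 1)) powr s)))"
  proof (intro sum_mono mult_left_mono)
    fix i assume i: "i \<in> {..<n}"
    have "(\<Sum>m\<in>AA. real (Ze n D m i i) + (\<Sum>j\<in>{..<n} - {i}. real (Ze n D m i j)))
        = (\<Sum>m\<in>AA. real (Ze n D m i i)) + (\<Sum>j\<in>{..<n} - {i}. \<Sum>m\<in>AA. real (Ze n D m i j))"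
      by (simp add: sum.distrib sum.swap[of _ AA])
    also have "\<dots> \<le> ?c * real (adj_deg n D i) ^ 2 / (NN - 1)
        + (\<Sum>j\<in>{..<n} - {i}. ?c * (real (adj_deg n D i) * real (adj_deg n D j) / (NN - 1)) powr s)"
      using i N5 s by (intro add_mono sum_mono sum_Ze_diag sum_Ze_offdiag) auto
    also have "\<dots> \<le> ?c * real (adj_deg n D i) ^ 2 / (NN - 1)
        + (\<Sum>j<n. ?c * (real (adj_deg n D i) * real (adj_deg n D j) / (NN - 1)) powr s)"
      by (intro add_left_mono sum_mono2) auto
    finally show "(\<Sum>m\<in>AA. real (Ze n D m i i) + (\<Sum>j\<in>{..<n} - {i}. real (Ze n D m i j)))
        \<le> ?c * real (adj_deg n D i) ^ 2 / (NN - 1)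
        + (\<Sum>j<n. ?c * (real (adj_deg n D i) * real (adj_deg n D j) / (NN - 1)) powr s)" .
  qed simp
  also have "\<dots> = ?c * (\<Sum>i<n. real (D i) ^ p * (real (adj_deg n D i) ^ 2 / (NN - 1)
          + (\<Sum>j<n. (real (adj_deg n D i) * real (adj_deg n D j) / (NN - 1)) powr s)))"
    by (simp add: sum_distrib_left sum_distrib_right algebra_simps)
  finally show ?thesis .
qed

lemma bound_second:
  assumes N5: "card HH \<ge> 5" and s: "1 \<le> s" "s \<le> 2"
  shows "(\<Sum>m\<in>AA. \<Sum>j<n. \<Sum>i<j. real (Ze n D m i j) * real (D i) * real (D j))
     \<le> real (card AA) * (\<Sum>j<n. \<Sum>i<j. real (D i) * real (D j) *
           (real (adj_deg n D i) * real (adj_deg n D j) / (NN - 1)) powr s)"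
proof -
  let ?c = "real (card AA)"
  have "(\<Sum>m\<in>AA. \<Sum>j<n. \<Sum>i<j. real (Ze n D m i j) * real (D i) * real (D j))
      = (\<Sum>j<n. \<Sum>i<j. (\<Sum>m\<in>AA. real (Ze n D m i j)) * (real (D i) * real (D j)))"
    by (simp add: sum.swap[of _ AA] sum_distrib_right mult.assoc)
  also have "\<dots> \<le> (\<Sum>j<n. \<Sum>i<j. (?c * (real (adj_deg n D i) * real (adj_deg n D j) / (NN - 1)) powr s)
        * (real (D i) * real (D j)))"
    using N5 s by (intro sum_mono mult_right_mono sum_Ze_offdiag) auto
  also have "\<dots> = ?c * (\<Sum>j<n. \<Sum>i<j. real (D i) * real (D j) *
           (real (adj_deg n D i) * real (adj_deg n D j) / (NN - 1)) powr s)"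
    by (simp add: sum_distrib_left algebra_simps)
  finally show ?thesis .
qed

end

lemma det_bounds:
  fixes n :: nat and D :: "nat \<Rightarrow> nat" and M W Q s :: real and p :: nat
  assumes DM: "\<And>i. i < n \<Longrightarrow> real (D i) \<le> M"
    and W: "(\<Sum>i<n. (real (D i) + 1) powr s) \<le> W"
    and Q: "Q > 0" "real (card (halfedges n D)) - 1 \<ge> Q"
    and s: "1 \<le> s" "s \<le> 2" and Mnn: "M \<ge> 0"
  shows "(\<Sum>i<n. real (D i) ^ p * (real (adj_deg n D i) ^ 2 / (real (card (halfedges n D)) - 1)
          + (\<Sum>j<n. (real (adj_deg n D i) * real (adj_deg n D j) / (real (card (halfedges n D)) - 1)) powr s)))
        \<le> (M + 1) ^ p * (M + 1) powr (2 - s) * W / Q + (M + 1) ^ p * W^2 / Q powr s"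
    and "(\<Sum>j<n. \<Sum>i<j. real (D i) * real (D j) *
           (real (adj_deg n D i) * real (adj_deg n D j) / (real (card (halfedges n D)) - 1)) powr s)
        \<le> (M + 1)^2 * W^2 / Q powr s"
proof -
  let ?N1 = "real (card (halfedges n D)) - 1"
  let ?a = "\<lambda>i. real (adj_deg n D i)" let ?b = "\<lambda>i. real (D i) + 1"
  define R where "R = M + 1"
  have M0: "M \<ge> 0" using Mnn .
  have ab: "?a i \<le> ?b i" for i using adj_deg_le(1)[of n D i] by linarith
  have bR: "?b i \<le> R" if "i < n" for i using DM[OF that] by (simp add: R_def)
  have DR: "real (D i) \<le> R" if "i < n" for i using DM[OF that] by (simp add: R_def)
  have b1: "?b i \<ge> 1" for i by simp
  have N1: "?N1 > 0" using Q by linarith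
  have W0: "0 \<le> (\<Sum>i<n. ?b i powr s)" by (intro sum_nonneg) auto
  have frac: "?a i * ?a j / ?N1 \<le> ?b i * ?b j / Q" for i j
  proof -
    have "?a i * ?a j / ?N1 \<le> ?b i * ?b j / ?N1"
      using N1 ab by (intro divide_right_mono mult_mono) auto
    also have "\<dots> \<le> ?b i * ?b j / Q"
      using Q by (intro divide_left_mono) auto
    finally show ?thesis .
  qed
  have fracs: "(?a i * ?a j / ?N1) powr s \<le> ?b i powr s * ?b j powr s / Q powr s" for i j
  proof -
    have "(?a i * ?a j / ?N1) powr s \<le> (?b i * ?b j / Q) powr s"
      using frac N1 s by (intro powr_mono2) auto
    also have "\<dots> = ?b i powr s * ?b j powr s / Q powr s"
      using Q by (simp add: powr_divide powr_mult)
    finally show ?thesis .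
  qed
  have sq: "?a i ^ 2 \<le> ?b i powr s * R powr (2 - s)" if "i < n" for i
  proof -
    have "?a i ^ 2 \<le> ?b i ^ 2" using ab by (intro power_mono) auto
    also have "\<dots> = ?b i powr s * ?b i powr (2 - s)"
    proof -
      have "?b i powr s * ?b i powr (2 - s) = ?b i powr (s + (2 - s))" by (simp add: powr_add[symmetric])
      also have "\<dots> = ?b i powr (real 2)" by simp
      also have "\<dots> = ?b i ^ 2" by (rule powr_realpow) (simp add: add_pos_nonneg)
      finally show ?thesis by (rule HOL.sym)
    qed
    also have "\<dots> \<le> ?b i powr s * R powr (2 - s)"
      using bR[OF that] s by (intro mult_left_mono powr_mono2) auto
    finally show ?thesis .
  qed
  have Rp: "real (D i) ^ p \<le> R ^ p" if "i < n" for i using DR[OF that] by (intro power_mono) auto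
  have term_i: "real (D i) ^ p * (?a i ^ 2 / ?N1 + (\<Sum>j<n. (?a i * ?a j / ?N1) powr s))
      \<le> R ^ p * (?b i powr s * R powr (2 - s) / Q + (\<Sum>j<n. ?b i powr s * ?b j powr s / Q powr s))"
    if i: "i < n" for i
  proof -
    have t1: "?a i ^ 2 / ?N1 \<le> ?b i powr s * R powr (2 - s) / Q"
    proof -
      have "?a i ^ 2 / ?N1 \<le> ?b i powr s * R powr (2 - s) / ?N1"
        using sq[OF i] N1 by (intro divide_right_mono) auto
      also have "\<dots> \<le> ?b i powr s * R powr (2 - s) / Q"
        using Q by (intro divide_left_mono) auto
      finally show ?thesis .
    qed
    have t2: "(\<Sum>j<n. (?a i * ?a j / ?N1) powr s) \<le> (\<Sum>j<n. ?b i powr s * ?b j powr s / Q powr s)"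
      by (intro sum_mono fracs)
    have t0: "0 \<le> ?a i ^ 2 / ?N1 + (\<Sum>j<n. (?a i * ?a j / ?N1) powr s)"
      using N1 by (intro add_nonneg_nonneg sum_nonneg) auto
    have "0 \<le> R ^ p" using i M0 R_def by auto
    then show ?thesis using Rp[OF i] t0 add_mono[OF t1 t2]
      by (intro mult_mono) auto
  qed
  have "(\<Sum>i<n. real (D i) ^ p * (?a i ^ 2 / ?N1 + (\<Sum>j<n. (?a i * ?a j / ?N1) powr s)))
      \<le> (\<Sum>i<n. R ^ p * (?b i powr s * R powr (2 - s) / Q + (\<Sum>j<n. ?b i powr s * ?b j powr s / Q powr s)))"
    using term_i by (intro sum_mono) auto
  also have "\<dots> = R ^ p * R powr (2 - s) * (\<Sum>i<n. ?b i powr s) / Q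
       + R ^ p * (\<Sum>i<n. ?b i powr s) * (\<Sum>j<n. ?b j powr s) / Q powr s"
    by (simp add: sum.distrib sum_distrib_left sum_distrib_right sum_divide_distrib algebra_simps)
  also have "\<dots> \<le> R ^ p * R powr (2 - s) * W / Q + R ^ p * W * W / Q powr s"
  proof -
    have "R \<ge> 1" using M0 R_def by auto
    then show ?thesis using W W0 Q
      by (intro add_mono divide_right_mono mult_left_mono mult_mono) auto
  qed
  finally show "(\<Sum>i<n. real (D i) ^ p * (?a i ^ 2 / ?N1 + (\<Sum>j<n. (?a i * ?a j / ?N1) powr s)))
        \<le> (M + 1) ^ p * (M + 1) powr (2 - s) * W / Q + (M + 1) ^ p * W^2 / Q powr s"
    unfolding R_def[symmetric] power2_eq_square by (simp add: mult.assoc)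
  have "(\<Sum>j<n. \<Sum>i<j. real (D i) * real (D j) * (?a i * ?a j / ?N1) powr s)
     \<le> (\<Sum>j<n. \<Sum>i<n. real (D i) * real (D j) * (?a i * ?a j / ?N1) powr s)"
    by (intro sum_mono sum_mono2) auto
  also have "\<dots> \<le> (\<Sum>j<n. \<Sum>i<n. R * R * (?b i powr s * ?b j powr s / Q powr s))"
    using DR fracs M0 R_def by (intro sum_mono mult_mono) (auto intro!: mult_nonneg_nonneg)
  also have "\<dots> = R * R * (\<Sum>i<n. ?b i powr s) * (\<Sum>j<n. ?b j powr s) / Q powr s"
    by (simp add: sum_distrib_left sum_distrib_right sum_divide_distrib algebra_simps)
  also have "\<dots> \<le> R * R * W * W / Q powr s"
  proof -
    have "R \<ge> 1" using M0 R_def by auto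
    then show ?thesis using W W0 Q
      by (intro divide_right_mono mult_left_mono mult_mono) auto
  qed
  finally show "(\<Sum>j<n. \<Sum>i<j. real (D i) * real (D j) * (?a i * ?a j / ?N1) powr s)
        \<le> (M + 1)^2 * W^2 / Q powr s"
    unfolding R_def[symmetric] power2_eq_square by (simp add: mult.assoc)
qed

lemma tail_nonneg: "0 \<le> tail d t" by (simp add: tail_def)
lemma tail_le1: "tail d t \<le> 1" by (simp add: tail_def)
lemma tail_mono: "t \<le> u \<Longrightarrow> tail d u \<le> tail d t"
  unfolding tail_def by (intro measure_pmf.finite_measure_mono) auto

lemma sv_doubling:
  assumes sv: "slowly_varying L" and e: "e > 0"
  shows "\<exists>x0\<ge>1. \<forall>x\<ge>x0. L x > 0 \<and> L (2 * x) \<le> 2 powr e * L x"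
proof -
  have pos: "\<forall>\<^sub>F x in at_top. L x > 0" and lim: "((\<lambda>x. L (2 * x) / L x) \<longlongrightarrow> 1) at_top"
    using sv by (auto simp: slowly_varying_def)
  have "1 < 2 powr e" using e by simp
  then have ev: "\<forall>\<^sub>F x in at_top. L (2 * x) / L x < 2 powr e"
    using lim order_tendstoD(2) by blast
  have "\<forall>\<^sub>F x in at_top. L x > 0 \<and> L (2 * x) / L x < 2 powr e"
    using pos ev by eventually_elim auto
  then obtain x1 where x1: "\<And>x. x \<ge> x1 \<Longrightarrow> L x > 0 \<and> L (2 * x) / L x < 2 powr e"
    by (auto simp: eventually_at_top_linorder)
  have "\<forall>x\<ge>max x1 1. L x > 0 \<and> L (2 * x) \<le> 2 powr e * L x"
  proof (intro allI impI)
    fix x assume "max x1 1 \<le> x"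
    then have "x \<ge> x1" by simp
    from x1[OF this] have "L x > 0" "L (2 * x) / L x < 2 powr e" by auto
    then show "L x > 0 \<and> L (2 * x) \<le> 2 powr e * L x"
      by (auto simp: divide_less_eq)
  qed
  then show ?thesis by (intro exI[of _ "max x1 1"]) auto
qed

lemma tail_powr_bound:
  assumes sv: "slowly_varying L" and tl: "\<forall>t>0. tail d t = L t * t powr (- \<gamma>)"
    and e: "0 < e" "e \<le> \<gamma>"
  shows "\<exists>C>0. \<forall>t>0. tail d t \<le> C * t powr (- (\<gamma> - e))"
proof -
  obtain x0 where x0: "x0 \<ge> 1" and dbl: "\<And>x. x \<ge> x0 \<Longrightarrow> L x > 0 \<and> L (2 * x) \<le> 2 powr e * L x"
    using sv_doubling[OF sv e(1)] by blast
  have Lle: "L x \<le> x powr \<gamma>" if "x > 0" for x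
  proof -
    have "L x = tail d x * x powr \<gamma>" using tl that by (simp add: powr_minus field_simps)
    also have "\<dots> \<le> 1 * x powr \<gamma>" by (intro mult_right_mono tail_le1) auto
    finally show ?thesis by simp
  qed
  define K where "K = (2 * x0) powr \<gamma>"
  have claim: "\<forall>x. x0 \<le> x \<and> x \<le> 2 ^ (k + 1) * x0 \<longrightarrow> L x \<le> K * (x / x0) powr e" for k :: nat
  proof (induction k)
    case 0
    show ?case
    proof (intro allI impI)
      fix x assume x: "x0 \<le> x \<and> x \<le> 2 ^ (0 + 1) * x0"
      have "L x \<le> x powr \<gamma>" using Lle x x0 by auto
      also have "\<dots> \<le> (2 * x0) powr \<gamma>" using x x0 e by (intro powr_mono2) auto
      also have "\<dots> = K * 1" by (simp add: K_def)
      also have "\<dots> \<le> K * (x / x0) powr e"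
        using x x0 e by (intro mult_left_mono ge_one_powr_ge_zero) (auto simp: K_def)
      finally show "L x \<le> K * (x / x0) powr e" .
    qed
  next
    case (Suc k)
    show ?case
    proof (intro allI impI)
      fix x assume x: "x0 \<le> x \<and> x \<le> 2 ^ (Suc k + 1) * x0"
      show "L x \<le> K * (x / x0) powr e"
      proof (cases "x \<le> 2 ^ (k + 1) * x0")
        case True then show ?thesis using Suc.IH x by blast
      next
        case False
        define y where "y = x / 2"
        have y1: "x0 \<le> y"
        proof -
          have "x0 \<le> 2 ^ k * x0" using x0 by simp
          also have "\<dots> \<le> y" using False by (simp add: y_def field_simps)
          finally show ?thesis .
        qed
        have y2: "y \<le> 2 ^ (k + 1) * x0" using x by (simp add: y_def field_simps)
        have "L x = L (2 * y)" by (simp add: y_def)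
        also have "\<dots> \<le> 2 powr e * L y" using dbl y1 by blast
        also have "\<dots> \<le> 2 powr e * (K * (y / x0) powr e)"
          using Suc.IH y1 y2 by (intro mult_left_mono) auto
        also have "\<dots> = K * ((2 * (y / x0)) powr e)"
        proof -
          have "(2 * (y / x0)) powr e = 2 powr e * (y / x0) powr e"
            by (rule powr_mult)
          then show ?thesis by simp
        qed
        also have "2 * (y / x0) = x / x0" by (simp add: y_def)
        finally show ?thesis .
      qed
    qed
  qed
  have Lbound: "L x \<le> K * (x / x0) powr e" if "x \<ge> x0" for x
  proof -
    obtain k :: nat where "x / x0 < 2 ^ k" using real_arch_pow[of 2 "x / x0"] by auto
    then have "x < 2 ^ k * x0" using x0 by (simp add: field_simps)
    moreover have "(2::real) ^ k * x0 \<le> 2 ^ (k + 1) * x0" using x0 by simp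
    ultimately have "x \<le> 2 ^ (k + 1) * x0" by linarith
    then show ?thesis using claim[of k] that by blast
  qed
  define C where "C = max (K * x0 powr (- e)) (x0 powr (\<gamma> - e))"
  have "x0 powr (\<gamma> - e) > 0" using x0 by simp
  then have Cpos: "C > 0" unfolding C_def by linarith
  show ?thesis
  proof (intro exI[of _ C] conjI allI impI Cpos)
    fix t :: real assume t: "t > 0"
    show "tail d t \<le> C * t powr (- (\<gamma> - e))"
    proof (cases "t \<ge> x0")
      case True
      have "tail d t = L t * t powr (- \<gamma>)" using tl t by simp
      also have "\<dots> \<le> K * (t / x0) powr e * t powr (- \<gamma>)"
        using Lbound[OF True] by (intro mult_right_mono) auto
      also have "\<dots> = (K * x0 powr (- e)) * t powr (- (\<gamma> - e))"
        using t x0 by (simp add: powr_divide powr_minus powr_diff field_simps powr_add)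
      also have "\<dots> \<le> C * t powr (- (\<gamma> - e))"
        by (intro mult_right_mono) (auto simp: C_def)
      finally show ?thesis .
    next
      case False
      have "tail d t \<le> 1" by (rule tail_le1)
      also have "1 = x0 powr (\<gamma> - e) * x0 powr (- (\<gamma> - e))" using x0 by (simp add: powr_add[symmetric])
      also have "\<dots> \<le> x0 powr (\<gamma> - e) * t powr (- (\<gamma> - e))"
        using False t e by (intro mult_left_mono powr_mono2') auto
      also have "\<dots> \<le> C * t powr (- (\<gamma> - e))"
        by (intro mult_right_mono) (auto simp: C_def)
      finally show ?thesis .
    qed
  qed
qed

lemma tail_half_pos:
  assumes sv: "slowly_varying L" and tl: "\<forall>t>0. tail d t = L t * t powr (- \<gamma>)"
  shows "tail d (1/2) > 0"
proof -
  obtain x0 where x0: "x0 \<ge> 1" and dbl: "\<And>x. x \<ge> x0 \<Longrightarrow> L x > 0 \<and> L (2 * x) \<le> 2 powr 1 * L x"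
    using sv_doubling[OF sv, of 1] by auto
  have "tail d x0 = L x0 * x0 powr (- \<gamma>)" using tl x0 by simp
  also have "\<dots> > 0" using dbl[of x0] x0 by simp
  finally have "tail d x0 > 0" .
  moreover have "tail d x0 \<le> tail d (1/2)" using x0 by (intro tail_mono) auto
  ultimately show ?thesis by simp
qed

lemma pmf_borel[simp]: "f \<in> borel_measurable (measure_pmf M)"
  by simp

lemma pmf_integrable_bounded:
  fixes f :: "'a \<Rightarrow> real"
  assumes "\<And>x. \<bar>f x\<bar> \<le> B"
  shows "integrable (measure_pmf M) f"
  by (rule measure_pmf.integrable_const_bound[where B = B]) (use assms in auto)

lemma pmf_markov:
  fixes u :: "'a \<Rightarrow> real"
  assumes "integrable (measure_pmf M) u" "\<And>x. 0 \<le> u x" "0 < c"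
  shows "measure_pmf.prob M {x. c < u x} \<le> measure_pmf.expectation M u / c"
proof -
  have "measure_pmf.prob M {x. c < u x} \<le> measure_pmf.prob M {x\<in>space (measure_pmf M). u x \<ge> c}"
    by (intro measure_pmf.finite_measure_mono) auto
  also have "\<dots> \<le> measure_pmf.expectation M u / c"
    by (rule integral_Markov_inequality_measure) (use assms in auto)
  finally show ?thesis .
qed

abbreviation PP :: "nat pmf \<Rightarrow> nat \<Rightarrow> (nat \<Rightarrow> nat) pmf" where
  "PP d n \<equiv> Pi_pmf {..<n} 0 (\<lambda>_. d)"

lemma PP_component: "i < n \<Longrightarrow> map_pmf (\<lambda>D. D i) (PP d n) = d"
  by (subst Pi_pmf_component) auto

lemma prob_max_le: "measure_pmf.prob (PP d n) {D. \<exists>i<n. M < real (D i)} \<le> real n * tail d M"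
proof -
  have "{D. \<exists>i<n. M < real (D i)} = (\<Union>i\<in>{..<n}. {D. M < real (D i)})" by auto
  then have "measure_pmf.prob (PP d n) {D. \<exists>i<n. M < real (D i)}
      \<le> (\<Sum>i\<in>{..<n}. measure_pmf.prob (PP d n) {D. M < real (D i)})"
    by (simp add: measure_UNION_le)
  also have "\<dots> = (\<Sum>i\<in>{..<n}. tail d M)"
  proof (intro sum.cong refl)
    fix i assume i: "i \<in> {..<n}"
    have "measure_pmf.prob (PP d n) {D. M < real (D i)}
        = measure_pmf.prob (map_pmf (\<lambda>D. D i) (PP d n)) {k. M < real k}" by simp
    also have "\<dots> = tail d M" using i by (simp add: PP_component tail_def)
    finally show "measure_pmf.prob (PP d n) {D. M < real (D i)} = tail d M" .
  qed
  finally show ?thesis by simp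
qed

lemma prob_sum_markov:
  fixes g :: "nat \<Rightarrow> real"
  assumes g0: "\<And>k. 0 \<le> g k" and gB: "\<And>k. g k \<le> B" and W: "W > 0"
  shows "measure_pmf.prob (PP d n) {D. W < (\<Sum>i<n. g (D i))} \<le> real n * measure_pmf.expectation d g / W"
proof -
  have ig: "integrable (measure_pmf d) g"
    by (rule pmf_integrable_bounded[where B = B]) (use g0 gB in \<open>auto simp: abs_le_iff\<close>)
  have "measure_pmf.prob (PP d n) {D. W < (\<Sum>i<n. g (D i))}
      \<le> measure_pmf.expectation (PP d n) (\<lambda>D. \<Sum>i<n. g (D i)) / W"
    by (rule pmf_markov) (use integrable_sum_Pi_pmf[of "{..<n}" "\<lambda>_. d" g] ig g0 W in \<open>auto intro: sum_nonneg\<close>)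
  also have "measure_pmf.expectation (PP d n) (\<lambda>D. \<Sum>i<n. g (D i)) = real n * measure_pmf.expectation d g"
    using expectation_sum_Pi_pmf[of "{..<n}" "\<lambda>_. d" g 0] ig by simp
  finally show ?thesis .
qed

lemma dyadic_pointwise:
  fixes x s :: real
  assumes "0 \<le> x" "x < 2 ^ J" "s \<ge> 0"
  shows "(x + 1) powr s \<le> 2 powr s + (\<Sum>j<J. 2 powr ((real j + 2) * s) * (if 2 ^ j \<le> x then 1 else 0))"
  using assms(1,2)
proof (induction J arbitrary: x rule: nat.induct)
  case zero
  then have "x < 1" by simp
  then have "(x + 1) powr s \<le> 2 powr s" using zero.prems assms(3) by (intro powr_mono2) auto
  then show ?case by simp
next
  case (Suc J)
  have nn: "0 \<le> 2 powr ((real J + 2) * s) * (if 2 ^ J \<le> x then 1 else 0)" by simp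
  show ?case
  proof (cases "x < 2 ^ J")
    case True
    then show ?thesis using Suc.IH[of x] Suc.prems nn by simp
  next
    case False
    have "x + 1 \<le> 2 ^ (J + 2)"
    proof -
      have "x + 1 < 2 ^ Suc J + 1" using Suc.prems by simp
      also have "(2::real) ^ Suc J + 1 \<le> 2 ^ (J + 2)"
      proof -
        have "(1::real) \<le> 2 ^ J" by (rule one_le_power) simp
        moreover have "(2::real) ^ Suc J = 2 * 2 ^ J" "(2::real) ^ (J + 2) = 4 * 2 ^ J" by simp_all
        ultimately show ?thesis by linarith
      qed
      finally show ?thesis by simp
    qed
    then have "(x + 1) powr s \<le> (2 ^ (J + 2)) powr s" using assms(3) Suc.prems by (intro powr_mono2) auto
    also have "(2::real) ^ (J + 2) = 2 powr (real J + 2)"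
    proof -
      have "(2::real) powr (real J + 2) = 2 powr (real (J + 2))" by (simp add: add.commute)
      also have "\<dots> = 2 ^ (J + 2)" by (rule powr_realpow) simp
      finally show ?thesis by simp
    qed
    also have "(2 powr (real J + 2)) powr s = 2 powr ((real J + 2) * s)" by (simp add: powr_powr)
    also have "\<dots> = 2 powr ((real J + 2) * s) * (if 2 ^ J \<le> x then 1 else 0)" using False by simp
    also have "\<dots> \<le> 2 powr s + (\<Sum>j<Suc J. 2 powr ((real j + 2) * s) * (if 2 ^ j \<le> x then 1 else 0))"
      by (simp add: sum_nonneg)
    finally show ?thesis .
  qed
qed

lemma trunc_moment:
  fixes s \<kappa> C M :: real
  assumes tb: "\<forall>t>0. tail d t \<le> C * t powr (- \<kappa>)" and C: "C > 0"
    and s: "0 \<le> s" "s < \<kappa>" and M: "M \<ge> 0"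
  shows "measure_pmf.expectation d (\<lambda>k. (min (real k) M + 1) powr s)
     \<le> 2 powr s + C * 2 powr (2 * s + \<kappa>) / (1 - 2 powr (s - \<kappa>))"
proof -
  obtain J :: nat where J: "M < 2 ^ J" using real_arch_pow[of 2 M] by auto
  let ?g = "\<lambda>k::nat. 2 powr s + (\<Sum>j<J. 2 powr ((real j + 2) * s) * indicator {k. 2 ^ j \<le> real k} k)"
  have fg: "(min (real k) M + 1) powr s \<le> ?g k" for k
  proof -
    have "(min (real k) M + 1) powr s \<le> 2 powr s + (\<Sum>j<J. 2 powr ((real j + 2) * s) * (if 2 ^ j \<le> min (real k) M then 1 else 0))"
      by (rule dyadic_pointwise) (use J M s in auto)
    also have "\<dots> \<le> ?g k"
      by (intro add_left_mono sum_mono mult_left_mono) (auto simp: indicator_def)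
    finally show ?thesis .
  qed
  have int_ind: "integrable (measure_pmf d) (indicator A :: nat \<Rightarrow> real)" for A
    by (rule pmf_integrable_bounded[where B = 1]) (auto simp: indicator_def)
  have int_f: "integrable (measure_pmf d) (\<lambda>k. (min (real k) M + 1) powr s)"
    by (rule pmf_integrable_bounded[where B = "(M + 1) powr s"]) (use M s in \<open>auto intro!: powr_mono2\<close>)
  have int_g: "integrable (measure_pmf d) ?g"
    by (intro Bochner_Integration.integrable_add Bochner_Integration.integrable_sum
        Bochner_Integration.integrable_mult_right int_ind measure_pmf.integrable_const)
  have "measure_pmf.expectation d (\<lambda>k. (min (real k) M + 1) powr s) \<le> measure_pmf.expectation d ?g"
    by (intro integral_mono int_f int_g fg)
  also have "\<dots> = 2 powr s + (\<Sum>j<J. 2 powr ((real j + 2) * s) * measure_pmf.prob d {k. 2 ^ j \<le> real k})"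
  proof -
    have "measure_pmf.expectation d ?g = measure_pmf.expectation d (\<lambda>k. 2 powr s)
       + measure_pmf.expectation d (\<lambda>k. \<Sum>j<J. 2 powr ((real j + 2) * s) * indicator {k. 2 ^ j \<le> real k} k)"
      by (intro Bochner_Integration.integral_add Bochner_Integration.integrable_sum
        Bochner_Integration.integrable_mult_right int_ind measure_pmf.integrable_const)
    also have "measure_pmf.expectation d (\<lambda>k. \<Sum>j<J. 2 powr ((real j + 2) * s) * indicator {k. 2 ^ j \<le> real k} k)
       = (\<Sum>j<J. measure_pmf.expectation d (\<lambda>k. 2 powr ((real j + 2) * s) * indicator {k. 2 ^ j \<le> real k} k))"
      by (intro Bochner_Integration.integral_sum Bochner_Integration.integrable_mult_right int_ind)
    also have "\<dots> = (\<Sum>j<J. 2 powr ((real j + 2) * s) * measure_pmf.prob d {k. 2 ^ j \<le> real k})"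
      by (intro sum.cong refl) (simp only: Bochner_Integration.integral_mult_right_zero integral_indicator, simp)
    finally show ?thesis by simp
  qed
  also have "\<dots> \<le> 2 powr s + (\<Sum>j<J. 2 powr ((real j + 2) * s) * (C * 2 powr \<kappa> * (2 powr (s - \<kappa>)) ^ j * 2 powr (- s * real j)))"
  proof (intro add_left_mono sum_mono mult_left_mono)
    fix j assume j: "j \<in> {..<J}"
    have "measure_pmf.prob d {k. 2 ^ j \<le> real k} \<le> tail d (2 ^ j / 2)"
      unfolding tail_def
    proof (intro measure_pmf.finite_measure_mono subsetI)
      fix k assume "k \<in> {k. 2 ^ j \<le> real k}"
      then have a: "(2::real) ^ j \<le> real k" by blast
      have b: "(0::real) < 2 ^ j" by simp
      show "k \<in> {k. 2 ^ j / 2 < real k}" unfolding mem_Collect_eq using a b by linarith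
    qed simp
    also have "\<dots> \<le> C * (2 ^ j / 2) powr (- \<kappa>)" using tb by simp
    also have "(2 ^ j / 2 :: real) powr (- \<kappa>) = 2 powr \<kappa> * (2 powr (s - \<kappa>)) ^ j * 2 powr (- s * real j)"
    proof -
      have "(2 ^ j / 2 :: real) = 2 powr (real j - 1)" by (simp add: powr_diff powr_realpow)
      then have "(2 ^ j / 2 :: real) powr (- \<kappa>) = 2 powr (\<kappa> - \<kappa> * real j)" by (simp add: powr_powr algebra_simps)
      moreover have "2 powr \<kappa> * (2 powr (s - \<kappa>)) ^ j * 2 powr (- s * real j) = 2 powr (\<kappa> - \<kappa> * real j)"
        by (simp add: powr_realpow[symmetric] powr_powr powr_add[symmetric] algebra_simps)
      ultimately show ?thesis by simp
    qed
    finally show "measure_pmf.prob d {k. 2 ^ j \<le> real k} \<le> C * 2 powr \<kappa> * (2 powr (s - \<kappa>)) ^ j * 2 powr (- s * real j)"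
      by (simp add: mult.assoc)
  qed simp
  also have "\<dots> = 2 powr s + C * 2 powr (2 * s + \<kappa>) * (\<Sum>j<J. (2 powr (s - \<kappa>)) ^ j)"
  proof -
    have eqj: "2 powr ((real j + 2) * s) * (C * 2 powr \<kappa> * (2 powr (s - \<kappa>)) ^ j * 2 powr (- s * real j))
        = C * 2 powr (2 * s + \<kappa>) * (2 powr (s - \<kappa>)) ^ j" for j
    proof -
      have e: "2 powr ((real j + 2) * s) * 2 powr \<kappa> * 2 powr (- s * real j) = 2 powr (2 * s + \<kappa>)"
        by (simp add: powr_add[symmetric] algebra_simps)
      have "2 powr ((real j + 2) * s) * (C * 2 powr \<kappa> * (2 powr (s - \<kappa>)) ^ j * 2 powr (- s * real j))
        = C * (2 powr (s - \<kappa>)) ^ j * (2 powr ((real j + 2) * s) * 2 powr \<kappa> * 2 powr (- s * real j))"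
        by (simp only: mult_ac)
      then show ?thesis unfolding e by (simp only: mult_ac)
    qed
    show ?thesis
      by (subst sum_distrib_left) (rule arg_cong[where f = "\<lambda>x. 2 powr s + x"], rule sum.cong[OF refl eqj])
  qed
  also have "\<dots> \<le> 2 powr s + C * 2 powr (2 * s + \<kappa>) * (1 / (1 - 2 powr (s - \<kappa>)))"
  proof -
    let ?r = "2 powr (s - \<kappa>) :: real"
    have "?r < 2 powr 0" using s by (intro powr_less_mono) auto
    then have r: "0 < ?r" "?r < 1" by auto
    have "(\<Sum>j<J. ?r ^ j) = (1 - ?r ^ J) / (1 - ?r)"
      using r s by (simp add: sum_gp_strict)
    also have "\<dots> \<le> 1 / (1 - ?r)" using r by (intro divide_right_mono) auto
    finally show ?thesis using C by (intro add_left_mono mult_left_mono) auto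
  qed
  finally show ?thesis by simp
qed

lemma map_pmf_bernoulli:
  "map_pmf (\<lambda>k. 1 \<le> k) d = bernoulli_pmf (measure_pmf.prob d {k. 1 \<le> k})"
proof (rule pmf_eqI)
  fix b :: bool
  let ?q = "measure_pmf.prob d {k. 1 \<le> k}"
  have q: "0 \<le> ?q" "?q \<le> 1" by auto
  show "pmf (map_pmf (\<lambda>k. 1 \<le> k) d) b = pmf (bernoulli_pmf ?q) b"
  proof (cases b)
    case True
    then show ?thesis using q by (simp add: pmf_map vimage_def)
  next
    case False
    have "pmf (map_pmf (\<lambda>k. 1 \<le> k) d) False = measure_pmf.prob d {k. \<not> 1 \<le> k}"
      by (simp add: pmf_map vimage_def)
    also have "\<dots> = 1 - ?q"
    proof -
      have "{k. \<not> 1 \<le> k} = space (measure_pmf d) - {k. 1 \<le> k}" by auto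
      then show ?thesis using measure_pmf.prob_compl[of "{k. 1 \<le> k}" d] by simp
    qed
    finally show ?thesis using False q by simp
  qed
qed

lemma prob_count_low:
  fixes d :: "nat pmf" and n :: nat
  assumes n: "n > 0"
  defines "q \<equiv> measure_pmf.prob d {k. 1 \<le> k}"
  shows "measure_pmf.prob (PP d n) {D. real (card {i\<in>{..<n}. 1 \<le> D i}) \<le> real n * q / 2}
      \<le> exp (- real n * q^2 / 2)"
proof -
  have q01: "q \<in> {0..1}" by (auto simp: q_def)
  interpret binomial_distribution n q by unfold_locales (fact q01)
  have eq: "map_pmf (\<lambda>D. card {i\<in>{..<n}. 1 \<le> D i}) (PP d n) = binomial_pmf n q"
  proof -
    have e0: "Pi_pmf {..<n} False (\<lambda>_. bernoulli_pmf q) = Pi_pmf {..<n} False (\<lambda>_. map_pmf (\<lambda>k. 1 \<le> k) d)"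
      by (simp only: map_pmf_bernoulli q_def)
    have e1: "Pi_pmf {..<n} False (\<lambda>_. map_pmf (\<lambda>k. 1 \<le> k) d)
        = map_pmf (\<lambda>h. (\<lambda>k. 1 \<le> k) \<circ> h) (PP d n)"
      by (rule Pi_pmf_map) auto
    have "binomial_pmf n q = map_pmf (\<lambda>f. card {x\<in>{..<n}. f x}) (Pi_pmf {..<n} False (\<lambda>_. bernoulli_pmf q))"
      using binomial_pmf_altdef'[of "{..<n}" n q False] q01 by simp
    then have "binomial_pmf n q = map_pmf (\<lambda>f. card {x\<in>{..<n}. f x}) (map_pmf (\<lambda>h. (\<lambda>k. 1 \<le> k) \<circ> h) (PP d n))"
      unfolding e0 e1 .
    then show ?thesis by (simp add: pmf.map_comp o_def)
  qed
  have "measure_pmf.prob (PP d n) {D. real (card {i\<in>{..<n}. 1 \<le> D i}) \<le> real n * q / 2}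
      = measure_pmf.prob (binomial_pmf n q) {x. real x \<le> real n * q - real n * q / 2}"
    by (simp flip: eq add: mult.commute)
  also have "\<dots> \<le> exp (- 2 * (real n * q / 2)^2 / real n)"
    by (rule prob_le[OF n]) (use q01 in auto)
  also have "- 2 * (real n * q / 2)^2 / real n = - real n * q^2 / 2"
    using n by (simp add: power2_eq_square field_simps)
  finally show ?thesis .
qed

lemma prob_bind_le:
  fixes P :: "'a pmf" and K :: "'a \<Rightarrow> 'b pmf"
  assumes bK: "\<And>x. x \<in> G \<Longrightarrow> measure_pmf.prob (K x) S \<le> b" and b0: "0 \<le> b"
  shows "measure_pmf.prob (bind_pmf P K) S \<le> measure_pmf.prob P (- G) + b"
proof -
  have pt: "emeasure (measure_pmf (K x)) S \<le> ennreal (indicator (- G) x + b)" for x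
  proof (cases "x \<in> G")
    case True
    then have "emeasure (measure_pmf (K x)) S = ennreal (measure_pmf.prob (K x) S)"
      by (simp add: measure_pmf.emeasure_eq_measure)
    also have "\<dots> \<le> ennreal (indicator (- G) x + b)" using bK[OF True] True by (intro ennreal_leI) simp
    finally show ?thesis .
  next
    case False
    have "emeasure (measure_pmf (K x)) S = ennreal (measure_pmf.prob (K x) S)"
      by (simp add: measure_pmf.emeasure_eq_measure)
    also have "\<dots> \<le> ennreal (indicator (- G) x + b)" using False b0
      by (intro ennreal_leI) (auto simp: measure_pmf.prob_le_1 add_increasing2)
    finally show ?thesis .
  qed
  have "ennreal (measure_pmf.prob (bind_pmf P K) S) = emeasure (measure_pmf (bind_pmf P K)) S"
    by (simp add: measure_pmf.emeasure_eq_measure)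
  also have "\<dots> = (\<integral>\<^sup>+x. emeasure (measure_pmf (K x)) S \<partial>measure_pmf P)" by simp
  also have "\<dots> \<le> (\<integral>\<^sup>+x. ennreal (indicator (- G) x + b) \<partial>measure_pmf P)"
    by (intro nn_integral_mono pt)
  also have "\<dots> = (\<integral>\<^sup>+x. ennreal (indicator (- G) x) + ennreal b \<partial>measure_pmf P)"
    using b0 by (intro nn_integral_cong) (auto simp: ennreal_plus)
  also have "\<dots> = (\<integral>\<^sup>+x. ennreal (indicator (- G) x) \<partial>measure_pmf P) + (\<integral>\<^sup>+x. ennreal b \<partial>measure_pmf P)"
    by (rule nn_integral_add) auto
  also have "\<dots> = emeasure (measure_pmf P) (- G) + ennreal b"
    by (simp add: ennreal_indicator measure_pmf.emeasure_space_1)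
  also have "\<dots> = ennreal (measure_pmf.prob P (- G) + b)"
    using b0 by (simp add: measure_pmf.emeasure_eq_measure ennreal_plus)
  finally have le: "ennreal (measure_pmf.prob (bind_pmf P K) S) \<le> ennreal (measure_pmf.prob P (- G) + b)" .
  have nn: "0 \<le> measure_pmf.prob P (- G) + b" using b0 by simp
  show ?thesis using le ennreal_le_iff[OF nn] by blast
qed

lemma finite_markov:
  fixes f :: "'a \<Rightarrow> real"
  assumes fin: "finite A" and ne: "A \<noteq> {}" and f0: "\<And>x. 0 \<le> f x" and c: "0 < c"
  shows "measure_pmf.prob (pmf_of_set A) {x. c < f x} \<le> (\<Sum>x\<in>A. f x) / real (card A) / c"
proof -
  have "measure_pmf.prob (pmf_of_set A) {x. c < f x} \<le> measure_pmf.expectation (pmf_of_set A) f / c"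
  proof (rule pmf_markov)
    show "integrable (measure_pmf (pmf_of_set A)) f"
      by (rule integrable_measure_pmf_finite) (use fin ne in simp)
  qed (use f0 c in auto)
  also have "measure_pmf.expectation (pmf_of_set A) f = (\<Sum>x\<in>A. f x) / real (card A)"
    using fin ne by (simp add: integral_pmf_of_set)
  finally show ?thesis .
qed

lemma CM_bound:
  fixes F :: "(nat \<Rightarrow> nat) \<Rightarrow> (nat \<times> nat \<Rightarrow> nat \<times> nat) \<Rightarrow> real"
  assumes F0: "\<And>D m. 0 \<le> F D m" and c: "0 < c" and b0: "0 \<le> b"
    and avg: "\<And>D. D \<in> G \<Longrightarrow> (\<Sum>m\<in>matchings (halfedges n D). F D m) \<le> real (card (matchings (halfedges n D))) * (b * c)"
  shows "measure_pmf.prob (CM d n) {(D, m). c < F D m} \<le> measure_pmf.prob (PP d n) (- G) + b"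
proof -
  have CMe: "CM d n = bind_pmf (PP d n) (\<lambda>D. map_pmf (\<lambda>m. (D, m)) (pmf_of_set (matchings (halfedges n D))))"
    by (simp add: CM_def map_pmf_def)
  show ?thesis unfolding CMe
  proof (rule prob_bind_le[OF _ b0])
    fix D assume D: "D \<in> G"
    let ?A = "matchings (halfedges n D)"
    have fin: "finite ?A" by (simp add: finite_matchings)
    have ne: "?A \<noteq> {}" by (simp add: matchings_nonempty even_card_halfedges)
    have cpos: "real (card ?A) > 0" using fin ne by (simp add: card_gt_0_iff)
    have "measure_pmf.prob (map_pmf (\<lambda>m. (D, m)) (pmf_of_set ?A)) {(D, m). c < F D m}
        = measure_pmf.prob (pmf_of_set ?A) {m. c < F D m}" by (simp add: vimage_def)
    also have "\<dots> \<le> (\<Sum>m\<in>?A. F D m) / real (card ?A) / c"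
      by (rule finite_markov[OF fin ne F0 c])
    also have "\<dots> \<le> b"
      using avg[OF D] cpos c by (simp add: field_simps)
    finally show "measure_pmf.prob (map_pmf (\<lambda>m. (D, m)) (pmf_of_set ?A)) {(D, m). c < F D m} \<le> b" .
  qed
qed

lemma asym_exps:
  fixes \<gamma> \<delta> \<eta> :: real and p :: nat
  assumes g1: "1 < \<gamma>" and g2: "\<gamma> < 2" and d: "\<delta> > 0" and e0: "0 < \<eta>"
    and e1: "\<eta> \<le> (\<gamma> - 1) / 2" and e2: "\<eta> \<le> \<delta> / (2 * (real p + 6))"
  shows "1 - (1/\<gamma> + \<eta>) * (\<gamma> - \<eta>/2) < 0"
    and "(1/\<gamma> + \<eta>) * real p + (1/\<gamma> + \<eta>) * (2 - (\<gamma> - \<eta>)) + \<eta> - (real p / \<gamma> + 2 - \<gamma> + \<delta>) < 0"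
    and "(1/\<gamma> + \<eta>) * real p + 2 + 2 * \<eta> - (\<gamma> - \<eta>) - (real p / \<gamma> + 2 - \<gamma> + \<delta>) < 0"
    and "2 * (1/\<gamma> + \<eta>) + 2 + 2 * \<eta> - (\<gamma> - \<eta>) - (2 / \<gamma> + 2 - \<gamma> + \<delta>) < 0"
proof -
  define g where "g = 1 / \<gamma>"
  have gg: "g * \<gamma> = 1" using g1 by (simp add: g_def)
  have g0: "0 < g" "g < 1" using g1 by (auto simp: g_def)
  have eh: "\<eta> \<le> 1/2" using e1 g2 by simp
  have ed: "\<eta> * (real p + 6) \<le> \<delta> / 2"
    using e2 by (simp add: field_simps)
  have "1 - (1/\<gamma> + \<eta>) * (\<gamma> - \<eta>/2) = \<eta> * (g/2 - \<gamma> + \<eta>/2)"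
    using gg by (simp add: g_def[symmetric] algebra_simps)
  also have "\<dots> < 0" using e0 g0 g1 eh by (intro mult_pos_neg) auto
  finally show "1 - (1/\<gamma> + \<eta>) * (\<gamma> - \<eta>/2) < 0" .
  have "(1/\<gamma> + \<eta>) * real p + (1/\<gamma> + \<eta>) * (2 - (\<gamma> - \<eta>)) + \<eta> - (real p / \<gamma> + 2 - \<gamma> + \<delta>)
      = (2 - \<gamma>) * (g - 1) + \<eta> * (real p + 3 - \<gamma> + g + \<eta>) - \<delta>"
  proof -
    have pg: "real p / \<gamma> = g * real p" by (simp add: g_def)
    show ?thesis using gg pg by (simp add: g_def[symmetric] algebra_simps)
  qed
  also have "\<dots> < 0"
  proof -
    have "(2 - \<gamma>) * (g - 1) < 0" using g2 g0 by (intro mult_pos_neg) auto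
    moreover have "\<eta> * (real p + 3 - \<gamma> + g + \<eta>) \<le> \<eta> * (real p + 6)"
      using e0 g0 g1 eh by (intro mult_left_mono) auto
    ultimately show ?thesis using ed d by linarith
  qed
  finally show "(1/\<gamma> + \<eta>) * real p + (1/\<gamma> + \<eta>) * (2 - (\<gamma> - \<eta>)) + \<eta> - (real p / \<gamma> + 2 - \<gamma> + \<delta>) < 0" .
  have "(1/\<gamma> + \<eta>) * real p + 2 + 2 * \<eta> - (\<gamma> - \<eta>) - (real p / \<gamma> + 2 - \<gamma> + \<delta>)
     = \<eta> * (real p + 3) - \<delta>" by (simp add: algebra_simps)
  also have "\<dots> < 0"
  proof -
    have "\<eta> * (real p + 3) \<le> \<eta> * (real p + 6)" using e0 by (intro mult_left_mono) auto
    then show ?thesis using ed d by linarith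
  qed
  finally show "(1/\<gamma> + \<eta>) * real p + 2 + 2 * \<eta> - (\<gamma> - \<eta>) - (real p / \<gamma> + 2 - \<gamma> + \<delta>) < 0" .
  have "2 * (1/\<gamma> + \<eta>) + 2 + 2 * \<eta> - (\<gamma> - \<eta>) - (2 / \<gamma> + 2 - \<gamma> + \<delta>) = 5 * \<eta> - \<delta>"
    by (simp add: algebra_simps)
  also have "\<dots> < 0"
  proof -
    have "\<eta> * 5 \<le> \<eta> * (real p + 6)" using e0 by (intro mult_left_mono) auto
    then show ?thesis using ed d by linarith
  qed
  finally show "2 * (1/\<gamma> + \<eta>) + 2 + 2 * \<eta> - (\<gamma> - \<eta>) - (2 / \<gamma> + 2 - \<gamma> + \<delta>) < 0" .
qed

lemma tendsto_powr_neg_nat: "a < 0 \<Longrightarrow> ((\<lambda>n::nat. c * real n powr a) \<longlonglongrightarrow> 0)"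
  using tendsto_mult_right_zero[OF tendsto_neg_powr[OF _ filterlim_real_sequentially]] by auto

lemma squeeze_ev:
  fixes f g :: "nat \<Rightarrow> real"
  assumes "\<And>n. n \<ge> Nb \<Longrightarrow> 0 \<le> f n \<and> f n \<le> g n" and "g \<longlonglongrightarrow> 0"
  shows "f \<longlonglongrightarrow> 0"
proof (rule tendsto_sandwich[OF _ _ tendsto_const assms(2)])
  show "\<forall>\<^sub>F n in sequentially. 0 \<le> f n" using assms(1) by (auto simp: eventually_sequentially)
  show "\<forall>\<^sub>F n in sequentially. f n \<le> g n" using assms(1) by (auto simp: eventually_sequentially)
qed

lemma exp_le_inv: "(t::real) > 0 \<Longrightarrow> exp (- t) \<le> 1 / t"
proof -
  assume t: "t > 0"
  have "t \<le> 1 + t" by simp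
  also have "\<dots> \<le> exp t" by (rule exp_ge_add_one_self)
  finally have "t \<le> exp t" .
  then show ?thesis using t by (simp add: exp_minus field_simps)
qed

lemma y_bounds:
  fixes x e1 :: real
  assumes x: "x \<ge> 1" and e1: "e1 > 0"
  shows "(x powr e1 + 1) ^ p \<le> 2 ^ p * x powr (e1 * real p)"
    and "t \<ge> 0 \<Longrightarrow> (x powr e1 + 1) powr t \<le> 2 powr t * x powr (e1 * t)"
proof -
  have y1: "x powr e1 \<ge> 1" using x e1 by (simp add: ge_one_powr_ge_zero)
  then have y2: "x powr e1 + 1 \<le> 2 * x powr e1" by simp
  have "(x powr e1 + 1) ^ p \<le> (2 * x powr e1) ^ p" using y2 by (intro power_mono) auto
  also have "\<dots> = 2 ^ p * (x powr e1) ^ p" by (simp add: power_mult_distrib)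
  also have "(x powr e1) ^ p = x powr (e1 * real p)"
    using x by (simp add: powr_powr[symmetric] powr_realpow)
  finally show "(x powr e1 + 1) ^ p \<le> 2 ^ p * x powr (e1 * real p)" .
  assume t: "t \<ge> 0"
  have "(x powr e1 + 1) powr t \<le> (2 * x powr e1) powr t" using y2 t by (intro powr_mono2) auto
  also have "\<dots> = 2 powr t * (x powr e1) powr t" by (simp add: powr_mult)
  also have "(x powr e1) powr t = x powr (e1 * t)" by (simp add: powr_powr)
  finally show "(x powr e1 + 1) powr t \<le> 2 powr t * x powr (e1 * t)" .
qed

lemma B1_bound:
  fixes x e1 \<eta> q s \<epsilon> T :: real
  assumes x: "x \<ge> 1" and e1: "e1 > 0" and q: "q > 0" and s: "1 \<le> s" "s \<le> 2" and eps: "\<epsilon> > 0"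
  shows "((x powr e1 + 1) ^ p * (x powr e1 + 1) powr (2 - s) * x powr (1 + \<eta>) / (x * q / 4)
          + (x powr e1 + 1) ^ p * (x powr (1 + \<eta>))\<^sup>2 / (x * q / 4) powr s) / (\<epsilon> * x powr T)
     \<le> (2 ^ p * 2 powr (2 - s) * (4 / q) / \<epsilon>) * x powr (e1 * real p + e1 * (2 - s) + \<eta> - T)
       + (2 ^ p * (4 / q) powr s / \<epsilon>) * x powr (e1 * real p + 2 + 2 * \<eta> - s - T)"
proof -
  have x0: "x > 0" using x by simp
  have a1: "(x powr e1 + 1) ^ p \<le> 2 ^ p * x powr (e1 * real p)" by (rule y_bounds(1)[OF x e1])
  have a2: "(x powr e1 + 1) powr (2 - s) \<le> 2 powr (2 - s) * x powr (e1 * (2 - s))"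
    by (rule y_bounds(2)[OF x e1]) (use s in simp)
  have wq: "x powr (1 + \<eta>) / (x * q / 4) = (4 / q) * x powr \<eta>"
    using x0 q by (simp add: powr_add field_simps)
  have wq2: "(x powr (1 + \<eta>))\<^sup>2 / (x * q / 4) powr s = (4 / q) powr s * x powr (2 + 2 * \<eta> - s)"
  proof -
    have "(x powr (1 + \<eta>))\<^sup>2 = x powr (2 + 2 * \<eta>)"
      using x0 by (simp add: power2_eq_square powr_add[symmetric])
    moreover have "(x * q / 4) powr s = x powr s * (q / 4) powr s"
      using x0 q by (simp add: powr_mult[symmetric])
    moreover have "(4 / q) powr s = 1 / (q / 4) powr s" using q by (simp add: powr_divide)
    ultimately show ?thesis using x0 q by (simp add: powr_diff field_simps)
  qed
  have T: "x powr T > 0" using x0 by simp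
  have t1: "(x powr e1 + 1) ^ p * (x powr e1 + 1) powr (2 - s) * x powr (1 + \<eta>) / (x * q / 4)
      \<le> (2 ^ p * x powr (e1 * real p)) * (2 powr (2 - s) * x powr (e1 * (2 - s))) * ((4 / q) * x powr \<eta>)"
  proof -
    have "(x powr e1 + 1) ^ p * (x powr e1 + 1) powr (2 - s) * x powr (1 + \<eta>) / (x * q / 4)
        = (x powr e1 + 1) ^ p * (x powr e1 + 1) powr (2 - s) * ((4 / q) * x powr \<eta>)"
      by (simp only: wq[symmetric] times_divide_eq_right)
    also have "\<dots> \<le> (2 ^ p * x powr (e1 * real p)) * (2 powr (2 - s) * x powr (e1 * (2 - s))) * ((4 / q) * x powr \<eta>)"
      using q by (intro mult_right_mono mult_mono a1 a2) auto
    finally show ?thesis .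
  qed
  have t2: "(x powr e1 + 1) ^ p * (x powr (1 + \<eta>))\<^sup>2 / (x * q / 4) powr s
      \<le> (2 ^ p * x powr (e1 * real p)) * ((4 / q) powr s * x powr (2 + 2 * \<eta> - s))"
  proof -
    have "(x powr e1 + 1) ^ p * (x powr (1 + \<eta>))\<^sup>2 / (x * q / 4) powr s
        = (x powr e1 + 1) ^ p * ((x powr (1 + \<eta>))\<^sup>2 / (x * q / 4) powr s)" by simp
    also have "\<dots> = (x powr e1 + 1) ^ p * ((4 / q) powr s * x powr (2 + 2 * \<eta> - s))"
      by (simp only: wq2)
    also have "\<dots> \<le> (2 ^ p * x powr (e1 * real p)) * ((4 / q) powr s * x powr (2 + 2 * \<eta> - s))"
      by (intro mult_right_mono a1) auto
    finally show ?thesis .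
  qed
  have "((x powr e1 + 1) ^ p * (x powr e1 + 1) powr (2 - s) * x powr (1 + \<eta>) / (x * q / 4)
          + (x powr e1 + 1) ^ p * (x powr (1 + \<eta>))\<^sup>2 / (x * q / 4) powr s) / (\<epsilon> * x powr T)
     \<le> ((2 ^ p * x powr (e1 * real p)) * (2 powr (2 - s) * x powr (e1 * (2 - s))) * ((4 / q) * x powr \<eta>)
         + (2 ^ p * x powr (e1 * real p)) * ((4 / q) powr s * x powr (2 + 2 * \<eta> - s))) / (\<epsilon> * x powr T)"
    using T eps by (intro divide_right_mono add_mono t1 t2) auto
  also have "\<dots> = (2 ^ p * 2 powr (2 - s) * (4 / q) / \<epsilon>) * x powr (e1 * real p + e1 * (2 - s) + \<eta> - T)
       + (2 ^ p * (4 / q) powr s / \<epsilon>) * x powr (e1 * real p + 2 + 2 * \<eta> - s - T)"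
    using x0 eps by (simp add: powr_add powr_diff field_simps)
  finally show ?thesis .
qed

lemma B2_bound:
  fixes x e1 \<eta> q s \<epsilon> T :: real
  assumes x: "x \<ge> 1" and e1: "e1 > 0" and q: "q > 0" and s: "1 \<le> s" "s \<le> 2" and eps: "\<epsilon> > 0"
  shows "((x powr e1 + 1)\<^sup>2 * (x powr (1 + \<eta>))\<^sup>2 / (x * q / 4) powr s) / (\<epsilon> * x powr T)
     \<le> (4 * (4 / q) powr s / \<epsilon>) * x powr (2 * e1 + 2 + 2 * \<eta> - s - T)"
proof -
  have x0: "x > 0" using x by simp
  have a1: "(x powr e1 + 1) ^ 2 \<le> 2 ^ 2 * x powr (e1 * real 2)" by (rule y_bounds(1)[OF x e1])
  have wq2: "(x powr (1 + \<eta>))\<^sup>2 / (x * q / 4) powr s = (4 / q) powr s * x powr (2 + 2 * \<eta> - s)"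
  proof -
    have "(x powr (1 + \<eta>))\<^sup>2 = x powr (2 + 2 * \<eta>)"
      using x0 by (simp add: power2_eq_square powr_add[symmetric])
    moreover have "(x * q / 4) powr s = x powr s * (q / 4) powr s"
      using x0 q by (simp add: powr_mult[symmetric])
    moreover have "(4 / q) powr s = 1 / (q / 4) powr s" using q by (simp add: powr_divide)
    ultimately show ?thesis using x0 q by (simp add: powr_diff field_simps)
  qed
  have "((x powr e1 + 1)\<^sup>2 * (x powr (1 + \<eta>))\<^sup>2 / (x * q / 4) powr s) / (\<epsilon> * x powr T)
      = ((x powr e1 + 1)\<^sup>2 * ((4 / q) powr s * x powr (2 + 2 * \<eta> - s))) / (\<epsilon> * x powr T)"
    by (simp only: wq2[symmetric] times_divide_eq_right)
  also have "\<dots> \<le> ((2 ^ 2 * x powr (e1 * real 2)) * ((4 / q) powr s * x powr (2 + 2 * \<eta> - s))) / (\<epsilon> * x powr T)"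
    using x0 eps by (intro divide_right_mono mult_right_mono a1) auto
  also have "\<dots> = (4 * (4 / q) powr s / \<epsilon>) * x powr (2 * e1 + 2 + 2 * \<eta> - s - T)"
    using x0 eps by (simp add: powr_add powr_diff field_simps)
  finally show ?thesis .
qed

lemma card_ge1_le_sum: "finite A \<Longrightarrow> card {i\<in>A. 1 \<le> (D i::nat)} \<le> sum D A"
proof -
  assume fin: "finite A"
  have "card {i\<in>A. 1 \<le> D i} = (\<Sum>i\<in>{i\<in>A. 1 \<le> D i}. 1)" by simp
  also have "\<dots> \<le> (\<Sum>i\<in>{i\<in>A. 1 \<le> D i}. D i)" by (intro sum_mono) auto
  also have "\<dots> \<le> sum D A" using fin by (intro sum_mono2) auto
  finally show ?thesis .
qed

theorem corollary2p2:
  fixes d :: "nat pmf" and \<gamma> :: real and p :: nat and \<delta> :: real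
  assumes "1 < \<gamma>" and "\<gamma> < 2"
    and "\<exists>L. slowly_varying L \<and> (\<forall>t>0. tail d t = L t * t powr (- \<gamma>))"
    and "\<delta> > 0"
  shows "(\<forall>\<epsilon>>0. (\<lambda>n. measure_pmf.prob (CM d n)
            {(D, m). \<bar>(\<Sum>i<n. real (D i) ^ p * real (Ye n D m i))
                     / real n powr (real p / \<gamma> + 2 - \<gamma> + \<delta>)\<bar> > \<epsilon>}) \<longlonglongrightarrow> 0)
    \<and> (\<forall>\<epsilon>>0. (\<lambda>n. measure_pmf.prob (CM d n)
            {(D, m). \<bar>(\<Sum>j<n. \<Sum>i<j. real (Ze n D m i j) * real (D i) * real (D j))
                     / real n powr (2 / \<gamma> + 2 - \<gamma> + \<delta>)\<bar> > \<epsilon>}) \<longlonglongrightarrow> 0)"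
proof -
  obtain L where sv: "slowly_varying L" and tl: "\<forall>t>0. tail d t = L t * t powr (- \<gamma>)"
    using assms(3) by blast
  have g1: "1 < \<gamma>" and g2: "\<gamma> < 2" and dpos: "\<delta> > 0" using assms by auto
  define \<eta> where "\<eta> = min ((\<gamma> - 1) / 2) (\<delta> / (2 * (real p + 6)))"
  have e0: "0 < \<eta>" using g1 dpos by (simp add: \<eta>_def)
  have e1: "\<eta> \<le> (\<gamma> - 1) / 2" unfolding \<eta>_def by (rule min.cobounded1)
  have e2: "\<eta> \<le> \<delta> / (2 * (real p + 6))" unfolding \<eta>_def by (rule min.cobounded2)
  define s where "s = \<gamma> - \<eta>"
  define \<kappa> where "\<kappa> = \<gamma> - \<eta> / 2"
  define e where "e = 1 / \<gamma> + \<eta>"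
  define T1 where "T1 = real p / \<gamma> + 2 - \<gamma> + \<delta>"
  define T2 where "T2 = 2 / \<gamma> + 2 - \<gamma> + \<delta>"
  have s1: "1 \<le> s" "s \<le> 2" "s < \<kappa>" "0 \<le> s" using e0 e1 g1 g2 by (auto simp: s_def \<kappa>_def)
  have "0 < 1 / \<gamma>" using g1 by simp
  then have epos: "e > 0" using e0 unfolding e_def by linarith
  have ex1: "1 - e * \<kappa> < 0" and ex2: "e * real p + e * (2 - s) + \<eta> - T1 < 0"
    and ex3: "e * real p + 2 + 2 * \<eta> - s - T1 < 0" and ex4: "2 * e + 2 + 2 * \<eta> - s - T2 < 0"
    using asym_exps[OF g1 g2 dpos e0 e1 e2] by (simp_all add: e_def s_def \<kappa>_def T1_def T2_def)
  obtain C where C: "C > 0" and tb: "\<forall>t>0. tail d t \<le> C * t powr (- \<kappa>)"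
    using tail_powr_bound[OF sv tl, of "\<eta> / 2"] e0 e1 g1 by (auto simp: \<kappa>_def)
  define q where "q = measure_pmf.prob d {k. 1 \<le> k}"
  have qpos: "q > 0"
  proof -
    have "{k. 1/2 < real k} = {k::nat. 1 \<le> k}" by auto
    then have "tail d (1/2) = q" by (simp add: tail_def q_def)
    then show ?thesis using tail_half_pos[OF sv tl] by simp
  qed
  define K where "K = 2 powr s + C * 2 powr (2 * s + \<kappa>) / (1 - 2 powr (s - \<kappa>))"
  have Kmom: "measure_pmf.expectation d (\<lambda>k. (min (real k) M + 1) powr s) \<le> K" if "M \<ge> 0" for M
    using trunc_moment[OF tb C s1(4) s1(3) that] by (simp add: K_def)
  define Mf where "Mf n = real n powr e" for n :: nat
  define Wf where "Wf n = real n powr (1 + \<eta>)" for n :: nat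
  define G where "G n = {D. (\<forall>i<n. real (D i) \<le> Mf n) \<and> (\<Sum>i<n. (min (real (D i)) (Mf n) + 1) powr s) \<le> Wf n
       \<and> real n * q / 2 < real (card {i\<in>{..<n}. 1 \<le> D i})}" for n
  define bad where "bad n = real n * (C * Mf n powr (- \<kappa>)) + real n * K / Wf n + exp (- real n * q^2 / 2)" for n

  have badb: "measure_pmf.prob (PP d n) (- G n) \<le> bad n" if n: "n > 0" for n
  proof -
    let ?A1 = "{D. \<exists>i<n. Mf n < real (D i)}"
    let ?A2 = "{D. Wf n < (\<Sum>i<n. (min (real (D i)) (Mf n) + 1) powr s)}"
    let ?A3 = "{D. real (card {i\<in>{..<n}. 1 \<le> D i}) \<le> real n * q / 2}"
    have M0: "Mf n > 0" "Wf n > 0" using n by (simp_all add: Mf_def Wf_def)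
    have "- G n \<subseteq> ?A1 \<union> ?A2 \<union> ?A3" by (auto simp: G_def not_le not_less)
    then have "measure_pmf.prob (PP d n) (- G n) \<le> measure_pmf.prob (PP d n) (?A1 \<union> ?A2 \<union> ?A3)"
      by (intro measure_pmf.finite_measure_mono) auto
    also have "\<dots> \<le> measure_pmf.prob (PP d n) ?A1 + measure_pmf.prob (PP d n) ?A2 + measure_pmf.prob (PP d n) ?A3"
    proof -
      have "measure_pmf.prob (PP d n) (?A1 \<union> ?A2 \<union> ?A3) \<le> measure_pmf.prob (PP d n) (?A1 \<union> ?A2) + measure_pmf.prob (PP d n) ?A3"
        by (rule measure_Un_le) auto
      moreover have "measure_pmf.prob (PP d n) (?A1 \<union> ?A2) \<le> measure_pmf.prob (PP d n) ?A1 + measure_pmf.prob (PP d n) ?A2"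
        by (rule measure_Un_le) auto
      ultimately show ?thesis by linarith
    qed
    also have "\<dots> \<le> real n * (C * Mf n powr (- \<kappa>)) + real n * K / Wf n + exp (- real n * q^2 / 2)"
    proof (intro add_mono)
      have "measure_pmf.prob (PP d n) ?A1 \<le> real n * tail d (Mf n)" by (rule prob_max_le)
      also have "\<dots> \<le> real n * (C * Mf n powr (- \<kappa>))" using tb M0 by (intro mult_left_mono) auto
      finally show "measure_pmf.prob (PP d n) ?A1 \<le> real n * (C * Mf n powr (- \<kappa>))" .
      have "measure_pmf.prob (PP d n) ?A2
          \<le> real n * measure_pmf.expectation d (\<lambda>k. (min (real k) (Mf n) + 1) powr s) / Wf n"
        by (rule prob_sum_markov[where B = "(Mf n + 1) powr s"]) (use M0 s1 in \<open>auto intro!: powr_mono2\<close>)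
      also have "\<dots> \<le> real n * K / Wf n"
        using Kmom[of "Mf n"] M0 by (intro divide_right_mono mult_left_mono) auto
      finally show "measure_pmf.prob (PP d n) ?A2 \<le> real n * K / Wf n" .
      show "measure_pmf.prob (PP d n) ?A3 \<le> exp (- real n * q^2 / 2)"
        using prob_count_low[OF n, of d] by (simp add: q_def)
    qed
    finally show ?thesis by (simp add: bad_def)
  qed

  have badlim: "bad \<longlonglongrightarrow> 0"
  proof (rule squeeze_ev[where Nb = 1])
    show "(\<lambda>n. C * real n powr (1 - e * \<kappa>) + K * real n powr (- \<eta>) + (2 / q^2) * real n powr (- 1)) \<longlonglongrightarrow> 0"
      using tendsto_add[OF tendsto_add[OF tendsto_powr_neg_nat[OF ex1, of C] tendsto_powr_neg_nat[of "- \<eta>" K]]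
        tendsto_powr_neg_nat[of "-1" "2 / q^2"]] e0 by simp
    fix n :: nat assume n: "n \<ge> 1"
    then have x: "real n > 0" by simp
    have "0 \<le> measure_pmf.expectation d (\<lambda>k. (min (real k) 0 + 1) powr s)"
      by (intro integral_nonneg_AE AE_pmfI) simp
    then have Kpos: "K \<ge> 0" using Kmom[of 0] by linarith
    have t1: "real n * (C * Mf n powr (- \<kappa>)) = C * real n powr (1 - e * \<kappa>)"
    proof -
      have a: "(real n powr e) powr (- \<kappa>) = real n powr (- (e * \<kappa>))" by (simp add: powr_powr)
      have b: "real n powr (1 - e * \<kappa>) = real n powr 1 * real n powr (- (e * \<kappa>))"
        using powr_add[of "real n" 1 "- (e * \<kappa>)"] by simp
      show ?thesis unfolding Mf_def a b using x by simp
    qed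
    have t2: "real n * K / Wf n = K * real n powr (- \<eta>)"
    proof -
      have a: "real n powr (1 + \<eta>) = real n * real n powr \<eta>" using x by (simp add: powr_add)
      have b: "real n powr (- \<eta>) = 1 / real n powr \<eta>" by (simp add: powr_minus divide_inverse)
      show ?thesis unfolding Wf_def a b using x by simp
    qed
    have t3: "exp (- real n * q^2 / 2) \<le> (2 / q^2) * real n powr (- 1)"
    proof -
      have "exp (- (real n * q^2 / 2)) \<le> 1 / (real n * q^2 / 2)"
        using x qpos by (intro exp_le_inv) auto
      also have "\<dots> = (2 / q^2) * real n powr (- 1)"
      proof -
        have "real n powr (- 1) = 1 / real n" using x by (simp add: powr_minus divide_inverse)
        then show ?thesis using x qpos by simp
      qed
      finally show ?thesis by simp
    qed
    have "0 \<le> bad n" unfolding bad_def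
      by (intro add_nonneg_nonneg mult_nonneg_nonneg divide_nonneg_nonneg) (use C Kpos in \<open>auto simp: Wf_def\<close>)
    moreover have "bad n \<le> C * real n powr (1 - e * \<kappa>) + K * real n powr (- \<eta>) + (2 / q^2) * real n powr (- 1)"
      unfolding bad_def t1 t2 using t3 by simp
    ultimately show "0 \<le> bad n \<and> bad n \<le> C * real n powr (1 - e * \<kappa>) + K * real n powr (- \<eta>) + (2 / q^2) * real n powr (- 1)"
      by simp
  qed

  obtain N0 :: nat where N0: "10 / q < real N0" using reals_Archimedean2 by blast
  have nlarge: "real n * q \<ge> 10" "n > 0" if "n \<ge> N0" for n
  proof -
    have "real N0 \<le> real n" using that by simp
    then have "10 / q < real n" using N0 by linarith
    then show "real n * q \<ge> 10" using qpos by (simp add: field_simps)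
    have "0 < 10 / q" using qpos by simp
    then have "real n > 0" using \<open>10 / q < real n\<close> by linarith
    then show "n > 0" by simp
  qed

  have good: "card (halfedges n D) \<ge> 5 \<and> real (card (halfedges n D)) - 1 \<ge> real n * q / 4
      \<and> (\<forall>i<n. real (D i) \<le> Mf n) \<and> (\<Sum>i<n. (real (D i) + 1) powr s) \<le> Wf n"
    if D: "D \<in> G n" and n: "real n * q \<ge> 10" for n D
  proof -
    have DM: "\<forall>i<n. real (D i) \<le> Mf n" and WW: "(\<Sum>i<n. (min (real (D i)) (Mf n) + 1) powr s) \<le> Wf n"
      and cnt: "real n * q / 2 < real (card {i\<in>{..<n}. 1 \<le> D i})" using D by (auto simp: G_def)
    have "card {i\<in>{..<n}. 1 \<le> D i} \<le> (\<Sum>i<n. D i)" by (rule card_ge1_le_sum) simp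
    also have "\<dots> \<le> card (halfedges n D)" by (rule card_halfedges_ge)
    finally have "real (card {i\<in>{..<n}. 1 \<le> D i}) \<le> real (card (halfedges n D))" by simp
    then have "real n * q / 2 < real (card (halfedges n D))" using cnt by linarith
    then have c1: "real (card (halfedges n D)) > 5" and c2: "real (card (halfedges n D)) - 1 \<ge> real n * q / 4"
      using n by auto
    have "(\<Sum>i<n. (real (D i) + 1) powr s) = (\<Sum>i<n. (min (real (D i)) (Mf n) + 1) powr s)"
      using DM by (intro sum.cong refl) (simp add: min_absorb1)
    then show ?thesis using c1 c2 DM WW by auto
  qed

  have part1: "(\<lambda>n. measure_pmf.prob (CM d n)
            {(D, m). \<bar>(\<Sum>i<n. real (D i) ^ p * real (Ye n D m i)) / real n powr T1\<bar> > \<epsilon>}) \<longlonglongrightarrow> 0"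
    if eps: "\<epsilon> > 0" for \<epsilon>
  proof (rule squeeze_ev[where Nb = N0])
    define c1 where "c1 = 2 ^ p * 2 powr (2 - s) * (4 / q) / \<epsilon>"
    define c2 where "c2 = 2 ^ p * (4 / q) powr s / \<epsilon>"
    show "(\<lambda>n. bad n + (c1 * real n powr (e * real p + e * (2 - s) + \<eta> - T1)
             + c2 * real n powr (e * real p + 2 + 2 * \<eta> - s - T1))) \<longlonglongrightarrow> 0"
      using tendsto_add[OF badlim tendsto_add[OF tendsto_powr_neg_nat[OF ex2] tendsto_powr_neg_nat[OF ex3]]] by simp
    fix n :: nat assume nN: "n \<ge> N0"
    note nl = nlarge[OF nN]
    define Q where "Q = real n * q / 4"
    define B1 where "B1 = (Mf n + 1) ^ p * (Mf n + 1) powr (2 - s) * Wf n / Q + (Mf n + 1) ^ p * (Wf n)\<^sup>2 / Q powr s"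
    define b where "b = B1 / (\<epsilon> * real n powr T1)"
    have Qpos: "Q > 0" using nl qpos by (simp add: Q_def)
    have Mf0: "Mf n \<ge> 0" by (simp add: Mf_def)
    have b0: "0 \<le> b" using Qpos Mf0 eps by (simp add: b_def B1_def Wf_def)
    have "measure_pmf.prob (CM d n)
            {(D, m). \<epsilon> < \<bar>(\<Sum>i<n. real (D i) ^ p * real (Ye n D m i)) / real n powr T1\<bar>}
        \<le> measure_pmf.prob (PP d n) (- G n) + b"
    proof (rule CM_bound[where G = "G n"])
      show "0 \<le> \<bar>(\<Sum>i<n. real (D i) ^ p * real (Ye n D m i)) / real n powr T1\<bar>" for D m by simp
      show "0 < \<epsilon>" by (rule eps)
      show "0 \<le> b" by (rule b0)
      fix D assume D: "D \<in> G n"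
      note gd = good[OF D nl(1)]
      have nT: "real n powr T1 > 0" using nl by simp
      have F1: "(\<Sum>i<n. real (D i) ^ p * (real (adj_deg n D i) ^ 2 / (real (card (halfedges n D)) - 1)
          + (\<Sum>j<n. (real (adj_deg n D i) * real (adj_deg n D j) / (real (card (halfedges n D)) - 1)) powr s)))
        \<le> B1"
        unfolding B1_def
        by (rule det_bounds(1)[where W = "Wf n" and Q = Q]) (use gd Qpos s1 Mf0 in \<open>auto simp: Q_def\<close>)
      have "(\<Sum>m\<in>matchings (halfedges n D). \<bar>(\<Sum>i<n. real (D i) ^ p * real (Ye n D m i)) / real n powr T1\<bar>)
          = (\<Sum>m\<in>matchings (halfedges n D). \<Sum>i<n. real (D i) ^ p * real (Ye n D m i)) / real n powr T1"
        using nT by (simp add: sum_divide_distrib sum_nonneg)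
      also have "\<dots> \<le> real (card (matchings (halfedges n D))) * B1 / real n powr T1"
      proof (intro divide_right_mono)
        have "(\<Sum>m\<in>matchings (halfedges n D). \<Sum>i<n. real (D i) ^ p * real (Ye n D m i))
          \<le> real (card (matchings (halfedges n D))) * (\<Sum>i<n. real (D i) ^ p * (real (adj_deg n D i) ^ 2 / (real (card (halfedges n D)) - 1)
          + (\<Sum>j<n. (real (adj_deg n D i) * real (adj_deg n D j) / (real (card (halfedges n D)) - 1)) powr s)))"
          by (rule bound_first[where n = n and D = D]) (use gd s1 in auto)
        also have "\<dots> \<le> real (card (matchings (halfedges n D))) * B1"
          by (intro mult_left_mono F1) auto
        finally show "(\<Sum>m\<in>matchings (halfedges n D). \<Sum>i<n. real (D i) ^ p * real (Ye n D m i))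
          \<le> real (card (matchings (halfedges n D))) * B1" .
      qed (use nT in auto)
      also have "\<dots> = real (card (matchings (halfedges n D))) * (b * \<epsilon>)"
        using eps nT by (simp add: b_def field_simps)
      finally show "(\<Sum>m\<in>matchings (halfedges n D). \<bar>(\<Sum>i<n. real (D i) ^ p * real (Ye n D m i)) / real n powr T1\<bar>)
          \<le> real (card (matchings (halfedges n D))) * (b * \<epsilon>)" .
    qed
    also have "\<dots> \<le> bad n + b" using badb[OF nl(2)] by simp
    also have "b \<le> c1 * real n powr (e * real p + e * (2 - s) + \<eta> - T1)
             + c2 * real n powr (e * real p + 2 + 2 * \<eta> - s - T1)"
      unfolding b_def B1_def Q_def Mf_def Wf_def c1_def c2_def
      by (rule B1_bound) (use nl epos qpos s1 eps in auto)
    finally show "0 \<le> measure_pmf.prob (CM d n)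
            {(D, m). \<bar>(\<Sum>i<n. real (D i) ^ p * real (Ye n D m i)) / real n powr T1\<bar> > \<epsilon>}
      \<and> measure_pmf.prob (CM d n)
            {(D, m). \<bar>(\<Sum>i<n. real (D i) ^ p * real (Ye n D m i)) / real n powr T1\<bar> > \<epsilon>}
        \<le> bad n + (c1 * real n powr (e * real p + e * (2 - s) + \<eta> - T1)
             + c2 * real n powr (e * real p + 2 + 2 * \<eta> - s - T1))"
      by simp
  qed

  have part2: "(\<lambda>n. measure_pmf.prob (CM d n)
            {(D, m). \<bar>(\<Sum>j<n. \<Sum>i<j. real (Ze n D m i j) * real (D i) * real (D j)) / real n powr T2\<bar> > \<epsilon>}) \<longlonglongrightarrow> 0"
    if eps: "\<epsilon> > 0" for \<epsilon>
  proof (rule squeeze_ev[where Nb = N0])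
    define c3 where "c3 = 4 * (4 / q) powr s / \<epsilon>"
    show "(\<lambda>n. bad n + c3 * real n powr (2 * e + 2 + 2 * \<eta> - s - T2)) \<longlonglongrightarrow> 0"
      using tendsto_add[OF badlim tendsto_powr_neg_nat[OF ex4]] by simp
    fix n :: nat assume nN: "n \<ge> N0"
    note nl = nlarge[OF nN]
    define Q where "Q = real n * q / 4"
    define B2 where "B2 = (Mf n + 1)\<^sup>2 * (Wf n)\<^sup>2 / Q powr s"
    define b where "b = B2 / (\<epsilon> * real n powr T2)"
    have Qpos: "Q > 0" using nl qpos by (simp add: Q_def)
    have Mf0: "Mf n \<ge> 0" by (simp add: Mf_def)
    have b0: "0 \<le> b" using Qpos Mf0 eps by (simp add: b_def B2_def Wf_def)
    have "measure_pmf.prob (CM d n)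
            {(D, m). \<epsilon> < \<bar>(\<Sum>j<n. \<Sum>i<j. real (Ze n D m i j) * real (D i) * real (D j)) / real n powr T2\<bar>}
        \<le> measure_pmf.prob (PP d n) (- G n) + b"
    proof (rule CM_bound[where G = "G n"])
      show "0 \<le> \<bar>(\<Sum>j<n. \<Sum>i<j. real (Ze n D m i j) * real (D i) * real (D j)) / real n powr T2\<bar>" for D m by simp
      show "0 < \<epsilon>" by (rule eps)
      show "0 \<le> b" by (rule b0)
      fix D assume D: "D \<in> G n"
      note gd = good[OF D nl(1)]
      have nT: "real n powr T2 > 0" using nl by simp
      have F2: "(\<Sum>j<n. \<Sum>i<j. real (D i) * real (D j) *
           (real (adj_deg n D i) * real (adj_deg n D j) / (real (card (halfedges n D)) - 1)) powr s)
        \<le> B2"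
        unfolding B2_def
        by (rule det_bounds(2)[where W = "Wf n" and Q = Q]) (use gd Qpos s1 Mf0 in \<open>auto simp: Q_def\<close>)
      have "(\<Sum>m\<in>matchings (halfedges n D). \<bar>(\<Sum>j<n. \<Sum>i<j. real (Ze n D m i j) * real (D i) * real (D j)) / real n powr T2\<bar>)
          = (\<Sum>m\<in>matchings (halfedges n D). \<Sum>j<n. \<Sum>i<j. real (Ze n D m i j) * real (D i) * real (D j)) / real n powr T2"
        using nT by (simp add: sum_divide_distrib sum_nonneg)
      also have "\<dots> \<le> real (card (matchings (halfedges n D))) * B2 / real n powr T2"
      proof (intro divide_right_mono)
        have "(\<Sum>m\<in>matchings (halfedges n D). \<Sum>j<n. \<Sum>i<j. real (Ze n D m i j) * real (D i) * real (D j))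
          \<le> real (card (matchings (halfedges n D))) * (\<Sum>j<n. \<Sum>i<j. real (D i) * real (D j) *
           (real (adj_deg n D i) * real (adj_deg n D j) / (real (card (halfedges n D)) - 1)) powr s)"
          by (rule bound_second[where n = n and D = D]) (use gd s1 in auto)
        also have "\<dots> \<le> real (card (matchings (halfedges n D))) * B2"
          by (intro mult_left_mono F2) auto
        finally show "(\<Sum>m\<in>matchings (halfedges n D). \<Sum>j<n. \<Sum>i<j. real (Ze n D m i j) * real (D i) * real (D j))
          \<le> real (card (matchings (halfedges n D))) * B2" .
      qed (use nT in auto)
      also have "\<dots> = real (card (matchings (halfedges n D))) * (b * \<epsilon>)"
        using eps nT by (simp add: b_def field_simps)
      finally show "(\<Sum>m\<in>matchings (halfedges n D). \<bar>(\<Sum>j<n. \<Sum>i<j. real (Ze n D m i j) * real (D i) * real (D j)) / real n powr T2\<bar>)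
          \<le> real (card (matchings (halfedges n D))) * (b * \<epsilon>)" .
    qed
    also have "\<dots> \<le> bad n + b" using badb[OF nl(2)] by simp
    also have "b \<le> c3 * real n powr (2 * e + 2 + 2 * \<eta> - s - T2)"
      unfolding b_def B2_def Q_def Mf_def Wf_def c3_def
      by (rule B2_bound) (use nl epos qpos s1 eps in auto)
    finally show "0 \<le> measure_pmf.prob (CM d n)
            {(D, m). \<bar>(\<Sum>j<n. \<Sum>i<j. real (Ze n D m i j) * real (D i) * real (D j)) / real n powr T2\<bar> > \<epsilon>}
      \<and> measure_pmf.prob (CM d n)
            {(D, m). \<bar>(\<Sum>j<n. \<Sum>i<j. real (Ze n D m i j) * real (D i) * real (D j)) / real n powr T2\<bar> > \<epsilon>}
        \<le> bad n + c3 * real n powr (2 * e + 2 + 2 * \<eta> - s - T2)"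
      by simp
  qed

  show ?thesis using part1 part2 unfolding T1_def T2_def by blast
qed

end
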